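(* Let $\mathcal T$ be a Galton–Watson tree with offspring distribution $\xi$, and assume $P(\xi=0)>0$ and $P(\xi>1)>0$. Suppose that $n\to\infty$ with $n\equiv1\pmod{\mathrm{span}(\xi)}$, and let $\tau$ be the unique number in $[0,\rho]$ with $\Psi(\tau)=1$ if $\nu\ge1$, and $\tau=\rho$ if $\nu<1$ (all computed for the weight sequence $w_k=P(\xi=k)$). Then $$\frac1n\log P(|\mathcal T|=n)\to\log\Phi(\tau)-\log\tau=\log\inf_{0\le t<\infty}\frac{\Phi(t)}{t}\in(-\infty,0].$$ If $E\xi=1$, or if $E\xi<1$ and $\rho=1$, then the limit is $0$; otherwise it is strictly negative. In other words, $P(|\mathcal T|=n)$ decays exponentially fast in the supercritical case (then $\tau<1$) and in the subcritical case with $\rho>1$ (then $\tau>1$), but only subexponentially in the critical case and in the subcritical case with $\rho=1$ (then $\tau=1$).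
   Context: $\Phi(t)=E t^\xi=\sum_kP(\xi=k)t^k$, $\rho\in[1,\infty]$ its radius of convergence; for $t$ with $\Phi(t)<\infty$, $\Psi(t)=t\Phi'(t)/\Phi(t)$; if $\Phi(\rho)=\infty$, $\Psi(\rho)=\lim_{t\uparrow\rho}\Psi(t)$; $\nu=\Psi(\rho)$. $\mathrm{span}(\xi)$ is the largest $d$ dividing every $k$ with $P(\xi=k)>0$. A Galton–Watson tree is the family tree in which each node independently has a number of children distributed as $\xi$; $|\mathcal T|$ is its number of nodes. *)

theory Defs
  imports "HOL-Analysis.Analysis"
begin

text \<open>Finite rooted ordered (plane) trees; a Galton--Watson tree restricted to finite
outcomes has law: P(T = t) = product over nodes v of p(number of children of v).\<close>

datatype ptree = Node "ptree list"

fun node_count :: "ptree \<Rightarrow> nat" where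
  "node_count (Node ts) = 1 + sum_list (map node_count ts)"

fun gw_prob :: "(nat \<Rightarrow> real) \<Rightarrow> ptree \<Rightarrow> real" where
  "gw_prob p (Node ts) = p (length ts) * prod_list (map (gw_prob p) ts)"

definition gw_size_prob :: "(nat \<Rightarrow> real) \<Rightarrow> nat \<Rightarrow> real" where
  "gw_size_prob p n = (\<Sum>t\<in>{t. node_count t = n}. gw_prob p t)"

definition offspring_dist :: "(nat \<Rightarrow> real) \<Rightarrow> bool" where
  "offspring_dist p \<longleftrightarrow> (\<forall>k. 0 \<le> p k) \<and> p sums 1"

definition gw_span :: "(nat \<Rightarrow> real) \<Rightarrow> nat" where
  "gw_span p = Gcd {k. 0 < p k}"

definition PhiE :: "(nat \<Rightarrow> real) \<Rightarrow> real \<Rightarrow> ereal" where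
  "PhiE p t = (\<Sum>k. ereal (p k * t ^ k))"

definition dPhiE :: "(nat \<Rightarrow> real) \<Rightarrow> real \<Rightarrow> ereal" where
  "dPhiE p t = (\<Sum>k. ereal (real k * p k * t ^ (k - 1)))"

definition psi :: "(nat \<Rightarrow> real) \<Rightarrow> real \<Rightarrow> ereal" where
  "psi p t = ereal t * dPhiE p t / PhiE p t"

text \<open>nu = Psi(rho), with Psi(rho) = lim_{t \<up> rho} Psi(t) when Phi(rho) = \<infinity>
  (in particular when rho = \<infinity>).\<close>
definition gw_nu :: "(nat \<Rightarrow> real) \<Rightarrow> ereal" where
  "gw_nu p = (let \<rho> = conv_radius p in
     if \<rho> \<noteq> \<infinity> \<and> PhiE p (real_of_ereal \<rho>) \<noteq> \<infinity> then psi p (real_of_ereal \<rho>)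
     else if \<rho> = \<infinity> then Lim at_top (psi p)
     else Lim (at_left (real_of_ereal \<rho>)) (psi p))"

definition PsiX :: "(nat \<Rightarrow> real) \<Rightarrow> real \<Rightarrow> ereal" where
  "PsiX p t = (if PhiE p t \<noteq> \<infinity> then psi p t else gw_nu p)"

definition gw_tau :: "(nat \<Rightarrow> real) \<Rightarrow> real" where
  "gw_tau p = (if 1 \<le> gw_nu p
     then (THE \<tau>. 0 \<le> \<tau> \<and> ereal \<tau> \<le> conv_radius p \<and> PsiX p \<tau> = 1)
     else real_of_ereal (conv_radius p))"

definition gw_mean :: "(nat \<Rightarrow> real) \<Rightarrow> ereal" where
  "gw_mean p = (\<Sum>k. ereal (real k * p k))"

end

theory Submission
  imports Defs
begin


lemma node_count_pos: "node_count t \<ge> 1"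
  by (cases t) auto

lemma length_le_sum_nc: "length ts \<le> sum_list (map node_count ts)"
proof (induction ts)
  case (Cons a ts)
  then show ?case using node_count_pos[of a] by simp
qed simp

lemma child_le_sum_nc: "c \<in> set ts \<Longrightarrow> node_count c \<le> sum_list (map node_count ts)"
  by (induction ts) auto

definition Bt :: "nat \<Rightarrow> ptree set" where "Bt n = {t. node_count t \<le> n}"

definition lists_len :: "nat \<Rightarrow> 'a set \<Rightarrow> 'a list set" where
  "lists_len k A = {ts. length ts = k \<and> set ts \<subseteq> A}"

lemma Bt_Suc_sub: "Bt (Suc n) \<subseteq> Node ` {ts. set ts \<subseteq> Bt n \<and> length ts \<le> n}"
proof
  fix t assume "t \<in> Bt (Suc n)"
  then obtain ts where t: "t = Node ts" and le: "sum_list (map node_count ts) \<le> n"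
    by (cases t) (auto simp: Bt_def)
  have "length ts \<le> n" using length_le_sum_nc[of ts] le by linarith
  moreover have "set ts \<subseteq> Bt n" using child_le_sum_nc le by (fastforce simp: Bt_def)
  ultimately show "t \<in> Node ` {ts. set ts \<subseteq> Bt n \<and> length ts \<le> n}" using t by blast
qed

lemma finite_Bt: "finite (Bt n)"
proof (induction n)
  case 0
  have "Bt 0 = {}" proof -
    have "node_count t \<noteq> 0" for t using node_count_pos[of t] by linarith
    thus ?thesis by (auto simp: Bt_def)
  qed
  then show ?case by simp
next
  case (Suc n)
  then show ?case
    by (rule finite_subset[OF Bt_Suc_sub finite_imageI[OF finite_lists_length_le]])
qed

lemma finite_nc_eq: "finite {t. node_count t = n}"
  by (rule finite_subset[OF _ finite_Bt[of n]]) (auto simp: Bt_def)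

lemma finite_lists_len: "finite A \<Longrightarrow> finite (lists_len k A)"
  unfolding lists_len_def by (rule finite_subset[OF _ finite_lists_length_le[of A k]]) auto

lemma lists_len_Suc: "lists_len (Suc k) A = (\<lambda>(a, ts). a # ts) ` (A \<times> lists_len k A)"
proof -
  have "ts \<in> (\<lambda>(a, ts). a # ts) ` (A \<times> lists_len k A)" if "ts \<in> lists_len (Suc k) A" for ts
    using that by (cases ts) (auto simp: lists_len_def)
  then show ?thesis by (auto simp: lists_len_def)
qed

lemma sum_lists_len:
  fixes f :: "'a \<Rightarrow> 'b::comm_semiring_1"
  assumes "finite A"
  shows "(\<Sum>ts\<in>lists_len k A. prod_list (map f ts)) = (sum f A) ^ k"
proof (induction k)
  case 0
  have "lists_len 0 A = {[]}" by (auto simp: lists_len_def)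
  then show ?case by simp
next
  case (Suc k)
  have inj: "inj_on (\<lambda>(a, ts). a # ts) (A \<times> lists_len k A)" by (auto simp: inj_on_def)
  have "(\<Sum>ts\<in>lists_len (Suc k) A. prod_list (map f ts))
      = (\<Sum>x\<in>A \<times> lists_len k A. prod_list (map f (fst x # snd x)))"
    unfolding lists_len_Suc by (subst sum.reindex[OF inj]) (auto intro!: sum.cong)
  also have "\<dots> = (\<Sum>a\<in>A. \<Sum>ts\<in>lists_len k A. f a * prod_list (map f ts))"
    by (simp add: sum.cartesian_product case_prod_beta)
  also have "\<dots> = sum f A * (\<Sum>ts\<in>lists_len k A. prod_list (map f ts))"
    by (rule sum_product[symmetric])
  finally show ?case using Suc by simp
qed



lemma prod_list_pow_nc: "prod_list (map (\<lambda>c. (x::real) ^ node_count c) ts) = x ^ sum_list (map node_count ts)"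
  by (induction ts) (auto simp: power_add)

lemma prod_list_mult_map: "prod_list (map (\<lambda>c. f c * g c) ts) = prod_list (map f ts) * prod_list (map (g::_\<Rightarrow>real) ts)"
  by (induction ts) auto

definition Wt :: "(nat \<Rightarrow> real) \<Rightarrow> real \<Rightarrow> ptree \<Rightarrow> real" where
  "Wt p x u = gw_prob p u * x ^ node_count u"

definition St :: "(nat \<Rightarrow> real) \<Rightarrow> nat \<Rightarrow> real \<Rightarrow> real" where
  "St p N x = (\<Sum>u\<in>Bt N. Wt p x u)"

lemma Wt_Node: "Wt p x (Node ts) = p (length ts) * x * prod_list (map (Wt p x) ts)"
proof -
  have "prod_list (map (Wt p x) ts) = prod_list (map (gw_prob p) ts) * x ^ sum_list (map node_count ts)"
    unfolding Wt_def by (simp add: prod_list_mult_map prod_list_pow_nc)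
  then show ?thesis by (simp add: Wt_def)
qed

lemma sum_Wt_lists:
  "(\<Sum>ts\<in>lists_len k (Bt N). Wt p x (Node ts)) = p k * x * St p N x ^ k"
proof -
  have "(\<Sum>ts\<in>lists_len k (Bt N). Wt p x (Node ts)) = (\<Sum>ts\<in>lists_len k (Bt N). p k * x * prod_list (map (Wt p x) ts))"
    by (intro sum.cong) (auto simp: Wt_Node lists_len_def)
  also have "\<dots> = p k * x * St p N x ^ k"
    by (simp add: sum_distrib_left[symmetric] sum_lists_len[OF finite_Bt] St_def)
  finally show ?thesis .
qed

lemma sum_Wt_Union:
  assumes "finite K"
  shows "(\<Sum>u\<in>Node ` (\<Union>k\<in>K. lists_len k (Bt N)). Wt p x u) = (\<Sum>k\<in>K. p k * x * St p N x ^ k)"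
proof -
  have "(\<Sum>u\<in>Node ` (\<Union>k\<in>K. lists_len k (Bt N)). Wt p x u) = (\<Sum>ts\<in>(\<Union>k\<in>K. lists_len k (Bt N)). Wt p x (Node ts))"
    by (subst sum.reindex) (auto simp: inj_on_def)
  also have "\<dots> = (\<Sum>k\<in>K. \<Sum>ts\<in>lists_len k (Bt N). Wt p x (Node ts))"
    by (rule sum.UNION_disjoint) (auto simp: assms finite_lists_len finite_Bt, auto simp: lists_len_def)
  finally show ?thesis by (simp add: sum_Wt_lists)
qed

context
  fixes p :: "nat \<Rightarrow> real"
  assumes pnn: "\<And>k. 0 \<le> p k"
begin

lemma gw_prob_nn: "0 \<le> gw_prob p t"
proof (induction t)
  case (Node ts)
  then show ?case by (auto intro!: mult_nonneg_nonneg prod_list_nonneg pnn)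
qed

lemma Wt_nn: "0 \<le> x \<Longrightarrow> 0 \<le> Wt p x u"
  by (simp add: Wt_def gw_prob_nn)

lemma St_nn: "0 \<le> x \<Longrightarrow> 0 \<le> St p N x"
  by (simp add: St_def Wt_nn sum_nonneg)

lemma St_upper:
  assumes x: "0 \<le> x" and t: "0 \<le> t" and sm: "summable (\<lambda>k. p k * t ^ k)"
    and xt: "x * (\<Sum>k. p k * t ^ k) \<le> t"
  shows "St p N x \<le> t"
proof (induction N)
  case 0
  have "Bt 0 = {}" using node_count_pos
    by (metis (mono_tags, lifting) Bt_def empty_Collect_eq not_one_le_zero order_trans)
  then show ?case by (simp add: St_def t)
next
  case (Suc N)
  let ?U = "Node ` (\<Union>k\<in>{..<Suc N}. lists_len k (Bt N))"
  have sub: "Bt (Suc N) \<subseteq> ?U"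
    using Bt_Suc_sub[of N] by (auto simp: lists_len_def)
  have fin: "finite ?U" by (auto intro!: finite_lists_len finite_Bt)
  have "St p (Suc N) x \<le> (\<Sum>u\<in>?U. Wt p x u)"
    unfolding St_def by (rule sum_mono2[OF fin sub]) (simp add: Wt_nn x)
  also have "\<dots> = (\<Sum>k<Suc N. p k * x * St p N x ^ k)" by (simp add: sum_Wt_Union)
  also have "\<dots> \<le> (\<Sum>k<Suc N. p k * x * t ^ k)"
    by (intro sum_mono mult_left_mono power_mono Suc St_nn x mult_nonneg_nonneg pnn)
  also have "\<dots> = x * (\<Sum>k<Suc N. p k * t ^ k)" by (simp add: sum_distrib_left algebra_simps)
  also have "\<dots> \<le> x * (\<Sum>k. p k * t ^ k)"
    by (intro mult_left_mono sum_le_suminf sm x) (auto intro!: mult_nonneg_nonneg pnn t zero_le_power)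
  also have "\<dots> \<le> t" by (rule xt)
  finally show ?case .
qed

end


lemma sum_nc_le: "set ts \<subseteq> Bt N \<Longrightarrow> sum_list (map node_count ts) \<le> length ts * N"
  by (induction ts) (auto simp: Bt_def)

lemma St_eq: "St p N x = (\<Sum>n<Suc N. gw_size_prob p n * x ^ n)"
proof -
  have B: "Bt N = (\<Union>n\<in>{..<Suc N}. {t. node_count t = n})" by (auto simp: Bt_def)
  have "St p N x = (\<Sum>n<Suc N. \<Sum>t\<in>{t. node_count t = n}. Wt p x t)"
    unfolding St_def B by (rule sum.UNION_disjoint) (auto simp: finite_nc_eq)
  also have "\<dots> = (\<Sum>n<Suc N. gw_size_prob p n * x ^ n)"
    by (intro sum.cong refl) (simp add: gw_size_prob_def Wt_def sum_distrib_right)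
  finally show ?thesis .
qed

context
  fixes p :: "nat \<Rightarrow> real"
  assumes pnn: "\<And>k. 0 \<le> p k"
begin

lemma gsp_nn: "0 \<le> gw_size_prob p n"
  by (simp add: gw_size_prob_def sum_nonneg gw_prob_nn pnn)

lemma St_lower:
  assumes x: "0 < x" and sm: "summable (\<lambda>n. gw_size_prob p n * x ^ n)"
  defines "z \<equiv> (\<Sum>n. gw_size_prob p n * x ^ n)"
  shows "summable (\<lambda>k. p k * z ^ k) \<and> x * (\<Sum>k. p k * z ^ k) \<le> z"
proof -
  have fnn: "0 \<le> gw_size_prob p n * x ^ n" for n using x by (simp add: gsp_nn)
  have Sz: "St p M x \<le> z" for M
    unfolding St_eq z_def by (rule sum_le_suminf[OF sm]) (auto simp: fnn)
  have "0 \<le> St p 0 x" by (rule St_nn) (auto simp: pnn x less_imp_le)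
  then have z0: "0 \<le> z" using Sz[of 0] by linarith
  have key: "x * (\<Sum>k<K. p k * St p N x ^ k) \<le> z" for N K
  proof -
    let ?U = "Node ` (\<Union>k\<in>{..<K}. lists_len k (Bt N))"
    have sub: "?U \<subseteq> Bt (1 + K * N)"
    proof
      fix u assume "u \<in> ?U"
      then obtain ts where u: "u = Node ts" and l: "length ts < K" and s: "set ts \<subseteq> Bt N"
        by (auto simp: lists_len_def)
      have "sum_list (map node_count ts) \<le> length ts * N" by (rule sum_nc_le[OF s])
      also have "\<dots> \<le> K * N" using l by simp
      finally show "u \<in> Bt (1 + K * N)" using u by (simp add: Bt_def)
    qed
    have "x * (\<Sum>k<K. p k * St p N x ^ k) = (\<Sum>u\<in>?U. Wt p x u)"
      by (simp add: sum_Wt_Union sum_distrib_left algebra_simps)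
    also have "\<dots> \<le> St p (1 + K * N) x"
      unfolding St_def by (rule sum_mono2[OF finite_Bt sub]) (simp add: Wt_nn pnn x less_imp_le)
    also have "\<dots> \<le> z" by (rule Sz)
    finally show ?thesis .
  qed
  have lim: "(\<lambda>N. St p N x) \<longlonglongrightarrow> z"
    unfolding St_eq z_def using LIMSEQ_Suc[OF summable_LIMSEQ[OF sm]] by simp
  have K: "x * (\<Sum>k<K. p k * z ^ k) \<le> z" for K
  proof (rule LIMSEQ_le_const2)
    show "(\<lambda>N. x * (\<Sum>k<K. p k * St p N x ^ k)) \<longlonglongrightarrow> x * (\<Sum>k<K. p k * z ^ k)"
      by (intro tendsto_intros lim)
  qed (use key in auto)
  have K': "(\<Sum>k<K. p k * z ^ k) \<le> z / x" for K
    using K[of K] x by (simp add: field_simps mult.commute)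
  have sm2: "summable (\<lambda>k. p k * z ^ k)"
    by (rule summableI_nonneg_bounded[OF _ K']) (simp add: pnn z0)
  have "(\<Sum>k. p k * z ^ k) \<le> z / x" by (rule suminf_le_const[OF sm2 K'])
  then show ?thesis using sm2 x by (simp add: field_simps mult.commute)
qed

end

fun graft :: "ptree \<Rightarrow> ptree \<Rightarrow> ptree" where
  "graft (Node []) s = s"
| "graft (Node (c # cs)) s = Node (graft c s # cs)"

lemma nc_graft: "node_count (graft t s) = node_count t + node_count s - 1"
proof (induction t s rule: graft.induct)
  case (2 c cs s)
  then show ?case using node_count_pos[of c] node_count_pos[of s] by simp
qed simp

lemma gw_graft: "gw_prob p (graft t s) * p 0 = gw_prob p t * gw_prob p s"
  by (induction t s rule: graft.induct) auto

lemma graft_inj: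
  "graft t s = graft t' s' \<Longrightarrow> node_count s = node_count s' \<Longrightarrow> t = t' \<and> s = s'"
proof (induction t s arbitrary: t' rule: graft.induct)
  case (1 s)
  obtain ts' where t': "t' = Node ts'" by (cases t')
  show ?case
  proof (cases ts')
    case (Cons c' cs')
    then have "node_count s = node_count (graft c' s') + sum_list (map node_count cs') + 1"
      using 1 t' by simp
    then show ?thesis using 1 nc_graft[of c' s'] node_count_pos[of c'] by simp
  qed (use 1 t' in auto)
next
  case (2 c cs s)
  obtain ts' where t': "t' = Node ts'" by (cases t')
  show ?case
  proof (cases ts')
    case Nil
    then have "s' = Node (graft c s # cs)" using 2 t' by simp
    then have "node_count s' = node_count (graft c s) + sum_list (map node_count cs) + 1"
      by simp
    then show ?thesis using 2 nc_graft[of c s] node_count_pos[of c] by simp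
  next
    case (Cons c' cs')
    then show ?thesis using "2.IH"[of c'] "2.prems" t' by auto
  qed
qed



lemma sum_list_nc_split: "sum_list (map node_count ts) = sum_list (map (\<lambda>c. node_count c - 1) ts) + length ts"
proof (induction ts)
  case (Cons a ts)
  then show ?case using node_count_pos[of a] by simp
qed simp

lemma dvd_sum_list_map: "(\<And>c. c \<in> set ts \<Longrightarrow> (d::nat) dvd f c) \<Longrightarrow> d dvd sum_list (map f ts)"
  by (induction ts) auto

context
  fixes p :: "nat \<Rightarrow> real"
  assumes pnn: "\<And>k. 0 \<le> p k"
begin

lemma gwnn: "0 \<le> gw_prob p t" by (rule gw_prob_nn) (rule pnn)

lemma gsp_supermult:
  assumes n: "1 \<le> n" and m: "1 \<le> m"
  shows "gw_size_prob p n * gw_size_prob p m \<le> p 0 * gw_size_prob p (n + m - 1)"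
proof -
  define C where "C = (\<lambda>n. {t. node_count t = n})"
  define g where "g = (\<lambda>x. graft (fst x) (snd x))"
  have inj: "inj_on g (C n \<times> C m)" unfolding inj_on_def C_def g_def
  proof (intro ballI impI)
    fix x y assume "x \<in> {t. node_count t = n} \<times> {t. node_count t = m}" "y \<in> {t. node_count t = n} \<times> {t. node_count t = m}"
      "graft (fst x) (snd x) = graft (fst y) (snd y)"
    then have "node_count (snd x) = node_count (snd y)" by (simp add: mem_Times_iff)
    then have "fst x = fst y \<and> snd x = snd y" using graft_inj[of "fst x" "snd x" "fst y" "snd y"] \<open>graft (fst x) (snd x) = graft (fst y) (snd y)\<close> by blast
    then show "x = y" by (simp add: prod_eq_iff)
  qed
  have sub: "g ` (C n \<times> C m) \<subseteq> C (n + m - 1)" using n m by (auto simp: nc_graft C_def g_def)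
  have finC: "finite (C k)" for k unfolding C_def by (rule finite_nc_eq)
  have "gw_size_prob p n * gw_size_prob p m = (\<Sum>t\<in>C n. \<Sum>s\<in>C m. gw_prob p t * gw_prob p s)"
    unfolding gw_size_prob_def C_def by (rule sum_product)
  also have "\<dots> = (\<Sum>x\<in>C n \<times> C m. gw_prob p (fst x) * gw_prob p (snd x))"
    by (subst sum.cartesian_product) (simp add: case_prod_beta)
  also have "\<dots> = (\<Sum>x\<in>C n \<times> C m. p 0 * gw_prob p (g x))"
    by (intro sum.cong refl) (simp add: g_def gw_graft[symmetric] mult.commute)
  also have "\<dots> = p 0 * (\<Sum>x\<in>C n \<times> C m. gw_prob p (g x))"
    by (rule sum_distrib_left[symmetric])
  also have "\<dots> = p 0 * (\<Sum>u\<in>g ` (C n \<times> C m). gw_prob p u)"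
    by (simp add: sum.reindex[OF inj])
  also have "\<dots> \<le> p 0 * (\<Sum>u\<in>C (n + m - 1). gw_prob p u)"
    by (intro mult_left_mono sum_mono2 finC sub gw_prob_nn pnn)
  finally show ?thesis unfolding gw_size_prob_def C_def .
qed

lemma gsp_star: "p k * p 0 ^ k \<le> gw_size_prob p (k + 1)"
proof -
  let ?t = "Node (replicate k (Node []))"
  have "node_count ?t = k + 1" by (simp add: sum_list_replicate)
  moreover have "gw_prob p ?t = p k * p 0 ^ k" by (simp add: prod_list_replicate)
  moreover have mem: "?t \<in> {t. node_count t = k + 1}" using calculation(1) by simp
  moreover have "gw_prob p ?t \<le> sum (gw_prob p) {t. node_count t = k + 1}"
    by (rule member_le_sum[OF mem]) (auto simp: finite_nc_eq gwnn)
  ultimately show ?thesis unfolding gw_size_prob_def by simp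
qed

lemma gw_pos_dvd: "0 < gw_prob p t \<Longrightarrow> gw_span p dvd (node_count t - 1)"
proof (induction t)
  case (Node ts)
  have pr: "0 \<le> prod_list (map (gw_prob p) ts)" by (intro prod_list_nonneg) (auto simp: gw_prob_nn pnn)
  have "p (length ts) \<noteq> 0" using Node.prems by auto
  then have pl: "0 < p (length ts)" using pnn[of "length ts"] by simp
  have "prod_list (map (gw_prob p) ts) \<noteq> 0" using Node.prems by auto
  then have "0 < gw_prob p c" if "c \<in> set ts" for c
    using that gwnn by (metis image_eqI order_le_less prod_list_zero_iff set_map)
  then have "gw_span p dvd node_count c - 1" if "c \<in> set ts" for c using Node.IH that by blast
  then have "gw_span p dvd sum_list (map (\<lambda>c. node_count c - 1) ts)" by (rule dvd_sum_list_map)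
  moreover have "gw_span p dvd length ts" unfolding gw_span_def by (rule Gcd_dvd) (simp add: pl)
  ultimately show ?case by (simp add: sum_list_nc_split)
qed

lemma gsp_pos_dvd:
  assumes "0 < gw_size_prob p n"
  shows "1 \<le> n \<and> gw_span p dvd (n - 1)"
proof -
  have "\<exists>t\<in>{t. node_count t = n}. gw_prob p t \<noteq> 0"
  proof (rule ccontr)
    assume "\<not> ?thesis"
    then have "gw_size_prob p n = 0" unfolding gw_size_prob_def by (intro sum.neutral) auto
    then show False using assms by simp
  qed
  then obtain t where "node_count t = n" "gw_prob p t \<noteq> 0" by auto
  then show ?thesis using gw_pos_dvd[of t] gwnn[of t] node_count_pos[of t] by auto
qed

end


lemma semigroup_large:
  fixes S K :: "nat set"
  assumes add: "\<And>a b. a \<in> S \<Longrightarrow> b \<in> S \<Longrightarrow> a + b \<in> S"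
    and KS: "\<And>k. k \<in> K \<Longrightarrow> k \<noteq> 0 \<Longrightarrow> k \<in> S"
    and Kne: "\<exists>k\<in>K. k \<noteq> 0"
    and Sd: "\<And>s. s \<in> S \<Longrightarrow> Gcd K dvd s"
  shows "\<exists>N. \<forall>s\<ge>N. Gcd K dvd s \<longrightarrow> s \<noteq> 0 \<longrightarrow> s \<in> S"
proof -
  define S0 where "S0 = insert 0 S"
  have add0: "a \<in> S0 \<Longrightarrow> b \<in> S0 \<Longrightarrow> a + b \<in> S0" for a b
    using add by (auto simp: S0_def)
  have mul0: "a \<in> S0 \<Longrightarrow> j * a \<in> S0" for a j
  proof (induction j)
    case (Suc j) then show ?case using add0[of a "j * a"] by simp
  qed (simp add: S0_def)
  have mul': "1 \<le> j \<Longrightarrow> a \<in> S \<Longrightarrow> j * a \<in> S" for a j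
  proof (induction j rule: nat_induct_at_least)
    case (Suc n) then show ?case using add[of a "n * a"] by (simp add: add.commute)
  qed simp
  have mul: "a \<in> S \<Longrightarrow> 1 \<le> j \<Longrightarrow> j * a \<in> S" for a j using mul' by blast
  define d where "d = Gcd K"
  have "d \<noteq> 0" using Kne Gcd_0_iff[of K] unfolding d_def by auto
  then have d0: "0 < d" by simp
  have S0d: "s \<in> S0 \<Longrightarrow> d dvd s" for s using Sd by (auto simp: S0_def d_def)
  define G where "G = {int a - int b | a b. a \<in> S0 \<and> b \<in> S0}"
  have Gsub: "x \<in> G \<Longrightarrow> y \<in> G \<Longrightarrow> x - y \<in> G" for x y
  proof -
    assume "x \<in> G" "y \<in> G"
    then obtain a b c e where "x = int a - int b" "y = int c - int e" "a \<in> S0" "b \<in> S0" "c \<in> S0" "e \<in> S0"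
      by (auto simp: G_def)
    then show "x - y \<in> G" unfolding G_def
      by (intro CollectI exI[of _ "a + e"] exI[of _ "b + c"]) (auto intro: add0)
  qed
  have Gmul: "x \<in> G \<Longrightarrow> z * x \<in> G" for x z
  proof -
    assume "x \<in> G"
    then obtain a b where ab: "x = int a - int b" "a \<in> S0" "b \<in> S0" by (auto simp: G_def)
    show "z * x \<in> G"
    proof (cases "z \<ge> 0")
      case True
      have e: "int (nat z * a) = z * int a" "int (nat z * b) = z * int b" using True by auto
      have "z * x = z * int a - z * int b" using ab(1) by (simp add: right_diff_distrib)
      also have "\<dots> = int (nat z * a) - int (nat z * b)" by (simp only: e)
      finally have "z * x = int (nat z * a) - int (nat z * b)" .
      then show ?thesis unfolding G_def using mul0 ab by blast
    next
      case False
      have e: "int (nat (-z) * a) = - z * int a" "int (nat (-z) * b) = - z * int b" using False by auto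
      have "z * x = (- z) * int b - (- z) * int a" unfolding ab(1) by (simp add: algebra_simps)
      also have "\<dots> = int (nat (-z) * b) - int (nat (-z) * a)" by (simp only: e)
      finally have "z * x = int (nat (-z) * b) - int (nat (-z) * a)" .
      then show ?thesis unfolding G_def using mul0 ab by blast
    qed
  qed
  obtain k where k: "k \<in> K" "k \<noteq> 0" using Kne by auto
  have kG: "int k \<in> G" unfolding G_def using KS[OF k] by (force simp: S0_def)
  define g where "g = (LEAST g. 0 < g \<and> int g \<in> G)"
  have gex: "0 < k \<and> int k \<in> G" using k kG by simp
  have g: "0 < g \<and> int g \<in> G" unfolding g_def by (rule LeastI[of _ k]) (rule gex)
  have gmin: "0 < h \<Longrightarrow> int h \<in> G \<Longrightarrow> g \<le> h" for h unfolding g_def by (rule Least_le) simp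
  have gdvd: "x \<in> G \<Longrightarrow> int g dvd x" for x
  proof -
    assume xG: "x \<in> G"
    have "x mod int g = x - (x div int g) * int g" by (simp add: minus_div_mult_eq_mod)
    also have "\<dots> \<in> G" by (intro Gsub xG Gmul) (use g in auto)
    finally have mG: "x mod int g \<in> G" .
    have m0: "0 \<le> x mod int g" "x mod int g < int g" using g by auto
    show "int g dvd x"
    proof (rule ccontr)
      assume "\<not> int g dvd x"
      then have "0 < x mod int g" using m0 by (simp add: dvd_eq_mod_eq_0 order_le_less)
      then have "g \<le> nat (x mod int g)" using gmin[of "nat (x mod int g)"] mG by simp
      then show False using m0 by linarith
    qed
  qed
  have "g dvd d" unfolding d_def
  proof (rule Gcd_greatest)
    fix k assume "k \<in> K"
    then have "k \<in> S0" using KS by (cases "k = 0") (auto simp: S0_def)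
    moreover have "0 \<in> S0" by (simp add: S0_def)
    ultimately have "int k \<in> G" unfolding G_def by force
    then show "g dvd k" using gdvd[of "int k"] by simp
  qed
  moreover have "d dvd g"
  proof -
    obtain a b where ab: "int g = int a - int b" "a \<in> S0" "b \<in> S0" using g by (auto simp: G_def)
    then have "int d dvd int a - int b" using S0d by (simp add: int_dvd_int_iff)
    then show ?thesis using ab(1) by (metis int_dvd_int_iff)
  qed
  ultimately have gd: "g = d" by (simp add: dvd_antisym)
  obtain A B where AB: "A = B + d" "A \<in> S0" "B \<in> S0"
  proof -
    obtain a b where "int d = int a - int b" "a \<in> S0" "b \<in> S0" using g unfolding gd G_def by auto
    moreover from this(1) have "a = b + d" by linarith
    ultimately show thesis using that[of a b] by simp
  qed
  show ?thesis
  proof (cases "B = 0")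
    case True
    then have dS: "d \<in> S" using AB d0 by (auto simp: S0_def)
    show ?thesis
    proof (intro exI[of _ 0] allI impI)
      fix s assume "0 \<le> s" "Gcd K dvd s" "s \<noteq> 0"
      then obtain j where "s = j * d" unfolding d_def[symmetric] by (auto simp: dvd_def mult.commute)
      moreover then have "1 \<le> j" using \<open>s \<noteq> 0\<close> by (cases j) auto
      ultimately
      show "s \<in> S" using mul[OF dS] by simp
    qed
  next
    case False
    then have BS: "B \<in> S" using AB by (auto simp: S0_def)
    obtain b where b: "B = b * d" using S0d[OF AB(3)] by (auto simp: dvd_def mult.commute)
    have b1: "1 \<le> b" using False b by (cases b) auto
    show ?thesis
    proof (intro exI[of _ "b * b * d"] allI impI)
      fix s assume s: "b * b * d \<le> s" "Gcd K dvd s" "s \<noteq> 0"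
      then obtain j where j: "s = j * d" unfolding d_def[symmetric] by (auto simp: dvd_def mult.commute)
      have jb: "b * b \<le> j" using s(1) j d0 by simp
      define q where "q = j div b"
      define r where "r = j mod b"
      have jqr: "j = q * b + r" by (simp add: q_def r_def)
      have rb: "r < b" using b1 by (simp add: r_def)
      have qb: "b \<le> q" unfolding q_def using jb b1
        by (metis div_le_mono nonzero_mult_div_cancel_right not_one_le_zero)
      have "s = (q - r) * B + r * A"
        using j jqr AB(1) b rb qb by (simp add: algebra_simps diff_mult_distrib)
      moreover have "(q - r) * B \<in> S" using mul[OF BS, of "q - r"] rb qb by simp
      moreover have "r * A \<in> S0" by (rule mul0[OF AB(2)])
      ultimately show "s \<in> S" using add by (auto simp: S0_def)
    qed
  qed
qed



lemma term_le_suminf: "summable f \<Longrightarrow> (\<And>n. 0 \<le> (f n::real)) \<Longrightarrow> f i \<le> suminf f"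
  using sum_le_suminf[of f "{i}"] by simp

lemma nonsummable_unbounded:
  fixes c :: "nat \<Rightarrow> real"
  assumes nn: "\<And>k. 1 \<le> k \<Longrightarrow> 0 \<le> c k" and ns: "\<not> summable c"
  shows "\<exists>N. M < (\<Sum>k<N. c k)"
proof (rule ccontr)
  assume "\<not> ?thesis"
  then have b: "(\<Sum>k<N. c k) \<le> M" for N by (simp add: not_less)
  have "summable (\<lambda>k. c (Suc k))"
  proof (rule summableI_nonneg_bounded)
    show "0 \<le> c (Suc n)" for n using nn by simp
    show "(\<Sum>k<n. c (Suc k)) \<le> M - c 0" for n
    proof -
      have "(\<Sum>k<Suc n. c k) = c 0 + (\<Sum>k<n. c (Suc k))" by (rule sum.lessThan_Suc_shift)
      then show ?thesis using b[of "Suc n"] by linarith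
    qed
  qed
  then show False using ns summable_Suc_iff by blast
qed

locale gwp =
  fixes p :: "nat \<Rightarrow> real"
  assumes dist: "offspring_dist p" and p0: "0 < p 0" and pbig: "\<exists>k>1. 0 < p k"
begin

lemma pnn: "0 \<le> p k" using dist by (simp add: offspring_dist_def)

lemma trm_nn [simp]: "0 \<le> t \<Longrightarrow> 0 \<le> p k * t ^ k" by (simp add: pnn)
lemma trm_nn2 [simp]: "0 \<le> t \<Longrightarrow> 0 \<le> real k * p k * t ^ k" by (simp add: pnn)
lemma trm_nn3 [simp]: "0 \<le> t \<Longrightarrow> 0 \<le> real k * p k * t ^ (k - 1)" by (simp add: pnn)

definition smP :: "real \<Rightarrow> bool" where "smP t \<longleftrightarrow> summable (\<lambda>k. p k * t ^ k)"
definition smG :: "real \<Rightarrow> bool" where "smG t \<longleftrightarrow> summable (\<lambda>k. real k * p k * t ^ k)"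
definition Ph :: "real \<Rightarrow> real" where "Ph t = (\<Sum>k. p k * t ^ k)"
definition Gs :: "real \<Rightarrow> real" where "Gs t = (\<Sum>k. real k * p k * t ^ k)"
definition rho :: ereal where "rho = conv_radius p"

lemma smP_rho: "smP t \<Longrightarrow> ereal \<bar>t\<bar> \<le> rho"
  unfolding smP_def rho_def using conv_radius_geI[of p t] by simp

lemma rho_smP: "ereal \<bar>t\<bar> < rho \<Longrightarrow> smP t"
  unfolding smP_def rho_def using summable_in_conv_radius[of t p] by simp

lemma smP1: "smP 1" using dist unfolding offspring_dist_def smP_def by (auto intro: sums_summable)
lemma Ph1: "Ph 1 = 1" using dist unfolding offspring_dist_def Ph_def by (simp add: sums_iff)

lemma rho_ge1: "1 \<le> rho" using smP_rho[OF smP1] by (simp add: one_ereal_def)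

lemma rho_pos: "0 < rho" using less_le_trans[OF _ rho_ge1, of 0] by simp

lemma exists_between: "0 \<le> t \<Longrightarrow> ereal t < rho \<Longrightarrow> \<exists>K. t < K \<and> ereal K < rho"
proof -
  assume t: "0 \<le> t" "ereal t < rho"
  show ?thesis
  proof (cases rho)
    case (real r)
    then show ?thesis using t by (intro exI[of _ "(t + r) / 2"]) auto
  next
    case PInf
    then show ?thesis by (intro exI[of _ "t + 1"]) auto
  next
    case MInf
    then show ?thesis using t by simp
  qed
qed

lemma smP_mono: "smP t \<Longrightarrow> 0 \<le> s \<Longrightarrow> s \<le> t \<Longrightarrow> smP s"
  unfolding smP_def
proof (rule summable_comparison_test'[of _ 0])
  fix n assume "0 \<le> s" "s \<le> t"
  then have "s ^ n \<le> t ^ n" by (intro power_mono) auto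
  then show "norm (p n * s ^ n) \<le> p n * t ^ n" using \<open>0 \<le> s\<close> by (simp add: abs_mult pnn mult_left_mono)
qed

lemma smG_mono: "smG t \<Longrightarrow> 0 \<le> s \<Longrightarrow> s \<le> t \<Longrightarrow> smG s"
  unfolding smG_def
proof (rule summable_comparison_test'[of _ 0])
  fix n assume "0 \<le> s" "s \<le> t"
  then have "s ^ n \<le> t ^ n" by (intro power_mono) auto
  then show "norm (real n * p n * s ^ n) \<le> real n * p n * t ^ n" using \<open>0 \<le> s\<close> by (simp add: abs_mult pnn mult_left_mono)
qed

lemma rho_smG:
  assumes t: "0 \<le> t" "ereal t < rho"
  shows "smG t"
proof -
  obtain K where K: "t < K" "ereal K < rho" using exists_between[OF t] by blast
  have "summable (\<lambda>n. diffs p n * t ^ n)"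
  proof (rule termdiff_converges[of t K])
    show "norm t < K" using t K by simp
    show "summable (\<lambda>n. p n * x ^ n)" if "norm x < K" for x
    proof -
      have "ereal \<bar>x\<bar> < ereal K" using that by simp
      then have "ereal \<bar>x\<bar> < rho" using K(2) by (rule less_trans)
      then show ?thesis using rho_smP[of x] unfolding smP_def by simp
    qed
  qed
  then have "summable (\<lambda>n. t * (diffs p n * t ^ n))" by (rule summable_mult)
  then have "summable (\<lambda>n. real (Suc n) * p (Suc n) * t ^ Suc n)"
    by (simp add: diffs_def algebra_simps)
  then show ?thesis unfolding smG_def by (subst summable_Suc_iff[symmetric]) simp
qed

lemma Ph_ge: "smP t \<Longrightarrow> 0 \<le> t \<Longrightarrow> p k * t ^ k \<le> Ph t"
  unfolding Ph_def smP_def by (rule term_le_suminf) (auto simp: pnn)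

lemma Ph_pos: "smP t \<Longrightarrow> 0 \<le> t \<Longrightarrow> 0 < Ph t"
  using Ph_ge[of t 0] p0 by simp

lemma Gs_nn: "0 \<le> t \<Longrightarrow> smG t \<Longrightarrow> 0 \<le> Gs t"
  unfolding Gs_def smG_def by (intro suminf_nonneg) (auto simp: pnn)

lemma PhiE_eq: "0 \<le> t \<Longrightarrow> PhiE p t = (if smP t then ereal (Ph t) else \<infinity>)"
  unfolding PhiE_def Ph_def smP_def
  using summable_ereal[of "\<lambda>k. p k * t ^ k"] suminf_ereal'[of "\<lambda>k. p k * t ^ k"]
  by (auto simp: pnn)

lemma tdPhiE_eq:
  assumes t: "0 < t"
  shows "ereal t * dPhiE p t = (if smG t then ereal (Gs t) else \<infinity>)"
proof -
  have tm: "t * (real k * p k * t ^ (k - 1)) = real k * p k * t ^ k" for k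
    by (cases k) auto
  have nn: "0 \<le> real k * p k * t ^ (k - 1)" for k using t by (auto simp: pnn)
  have iff: "summable (\<lambda>k. real k * p k * t ^ (k - 1)) \<longleftrightarrow> smG t"
    unfolding smG_def tm[symmetric] using t by (simp add: summable_cmult_iff)
  show ?thesis
  proof (cases "smG t")
    case True
    then have s: "summable (\<lambda>k. real k * p k * t ^ (k - 1))" using iff by simp
    have "ereal t * dPhiE p t = ereal (t * (\<Sum>k. real k * p k * t ^ (k - 1)))"
      unfolding dPhiE_def by (subst suminf_ereal'[OF s]) simp
    also have "\<dots> = ereal (Gs t)" unfolding Gs_def tm[symmetric] by (subst suminf_mult[OF s]) simp
    finally show ?thesis using True by simp
  next
    case False
    then have "dPhiE p t = \<infinity>" using iff summable_ereal[of "\<lambda>k. real k * p k * t ^ (k - 1)"] nn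
      unfolding dPhiE_def by auto
    then show ?thesis using False t by simp
  qed
qed

lemma psi0: "psi p 0 = 0"
  unfolding psi_def by (simp add: zero_ereal_def[symmetric])

lemma psi_eq:
  assumes t: "0 < t" and P: "smP t"
  shows "psi p t = (if smG t then ereal (Gs t / Ph t) else \<infinity>)"
proof -
  have Pp: "0 < Ph t" using Ph_pos[OF P] t by simp
  show ?thesis unfolding psi_def tdPhiE_eq[OF t] PhiE_eq[OF less_imp_le[OF t]] using P Pp
    by (cases "smG t") (auto simp: ereal_divide_ereal ereal_divide)
qed

end


lemma tangent_step:
  fixes t \<tau> m :: real
  assumes t: "0 \<le> t" and A: "m * X * t \<le> \<tau> * Y + (m - 1) * \<tau> * X"
  shows "(m + 1) * \<tau> * X * t + m * X * (t - \<tau>)^2 \<le> \<tau> * (t * Y) + m * \<tau> * \<tau> * X"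
proof -
  have A': "m * X * t * t \<le> (\<tau> * Y + (m - 1) * \<tau> * X) * t" using mult_right_mono[OF A t] .
  show ?thesis using A' by (simp add: algebra_simps power2_eq_square)
qed

lemma tangent_ineq:
  fixes t \<tau> :: real
  assumes t: "0 \<le> t" and tau: "0 \<le> \<tau>"
  shows "real k * \<tau> ^ k * t \<le> \<tau> * t ^ k + (real k - 1) * \<tau> ^ (k + 1)"
proof (induction k)
  case 0 then show ?case by simp
next
  case (Suc m)
  have A: "real m * \<tau>^m * t \<le> \<tau> * t^m + (real m - 1) * \<tau> * \<tau>^m" using Suc by (simp add: algebra_simps)
  have "(real m + 1) * \<tau> * \<tau>^m * t + real m * \<tau>^m * (t - \<tau>)^2 \<le> \<tau> * (t * t^m) + real m * \<tau> * \<tau> * \<tau>^m"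
    by (rule tangent_step[OF t]) (use A in \<open>simp add: algebra_simps\<close>)
  moreover have "0 \<le> real m * \<tau>^m * (t - \<tau>)^2" using tau by simp
  ultimately show ?case by (simp add: algebra_simps)
qed

lemma tangent_strict:
  fixes t \<tau> :: real
  assumes t: "0 \<le> t" and tau: "0 < \<tau>" and k: "2 \<le> k" and ne: "t \<noteq> \<tau>"
  shows "real k * \<tau> ^ k * t < \<tau> * t ^ k + (real k - 1) * \<tau> ^ (k + 1)"
proof -
  obtain m where m: "k = Suc m" "1 \<le> m" using k by (cases k) auto
  have "real m * \<tau> ^ m * t \<le> \<tau> * t ^ m + (real m - 1) * \<tau> ^ (m + 1)"
    using tangent_ineq[OF t less_imp_le[OF tau]] .
  then have A: "real m * \<tau>^m * t \<le> \<tau> * t^m + (real m - 1) * \<tau> * \<tau>^m" by (simp add: algebra_simps)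
  have "(real m + 1) * \<tau> * \<tau>^m * t + real m * \<tau>^m * (t - \<tau>)^2 \<le> \<tau> * (t * t^m) + real m * \<tau> * \<tau> * \<tau>^m"
    by (rule tangent_step[OF t]) (use A in \<open>simp add: algebra_simps\<close>)
  moreover have "0 < real m * \<tau>^m * (t - \<tau>)^2" using tau m ne by simp
  ultimately show ?thesis using m by (simp add: algebra_simps)
qed


lemma pw_nonneg:
  fixes s t :: real
  assumes s: "0 \<le> s" and st: "s \<le> t"
  shows "0 \<le> (real k - real j) * (t ^ k * s ^ j - s ^ k * t ^ j)"
proof (cases "j \<le> k")
  case True
  then obtain d where d: "k = j + d" using le_Suc_ex by blast
  have "t ^ k * s ^ j - s ^ k * t ^ j = (t * s) ^ j * (t ^ d - s ^ d)"
    by (simp add: d power_add algebra_simps power_mult_distrib)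
  moreover have "s ^ d \<le> t ^ d" using s st by (intro power_mono) auto
  ultimately have "0 \<le> t ^ k * s ^ j - s ^ k * t ^ j" using s st by simp
  then show ?thesis using True by simp
next
  case False
  then obtain d where d: "j = k + d" using le_Suc_ex[of k j] by auto
  have "t ^ k * s ^ j - s ^ k * t ^ j = - ((t * s) ^ k * (t ^ d - s ^ d))"
    by (simp add: d power_add algebra_simps power_mult_distrib)
  moreover have "s ^ d \<le> t ^ d" using s st by (intro power_mono) auto
  ultimately have "t ^ k * s ^ j - s ^ k * t ^ j \<le> 0" using s st by simp
  moreover have "real k - real j \<le> 0" using False by simp
  ultimately show ?thesis by (simp add: mult_nonpos_nonpos)
qed

lemma DSfin:
  fixes a :: "nat \<Rightarrow> real" and s t :: real
  assumes a: "\<And>k. 0 \<le> a k" and s: "0 \<le> s" and st: "s \<le> t"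
  shows "(\<Sum>k<N. real k * a k * s ^ k) * (\<Sum>j<N. a j * t ^ j) \<le> (\<Sum>k<N. real k * a k * t ^ k) * (\<Sum>j<N. a j * s ^ j)"
proof -
  define w where "w k j = a k * a j * (t ^ k * s ^ j - s ^ k * t ^ j)" for k j
  define X where "X = (\<Sum>k<N. \<Sum>j<N. real k * w k j)"
  have diff: "(\<Sum>k<N. real k * a k * t ^ k) * (\<Sum>j<N. a j * s ^ j) - (\<Sum>k<N. real k * a k * s ^ k) * (\<Sum>j<N. a j * t ^ j) = X"
    unfolding X_def w_def sum_product sum_subtractf[symmetric]
    by (intro sum.cong refl) (simp add: algebra_simps)
  have "X = (\<Sum>j<N. \<Sum>k<N. real k * w k j)" unfolding X_def by (rule sum.swap)
  also have "\<dots> = (\<Sum>k<N. \<Sum>j<N. - (real j * w k j))"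
    by (intro sum.cong refl) (simp add: w_def algebra_simps)
  also have "\<dots> = - (\<Sum>k<N. \<Sum>j<N. real j * w k j)" by (simp add: sum_negf)
  finally have X2: "2 * X = (\<Sum>k<N. \<Sum>j<N. (real k - real j) * w k j)"
    unfolding X_def by (simp add: algebra_simps sum.distrib sum_subtractf)
  have "0 \<le> (\<Sum>k<N. \<Sum>j<N. (real k - real j) * w k j)"
  proof (intro sum_nonneg)
    fix k j
    have "0 \<le> a k * a j * ((real k - real j) * (t ^ k * s ^ j - s ^ k * t ^ j))"
      using pw_nonneg[OF s st, of k j] a by simp
    then show "0 \<le> (real k - real j) * w k j" by (simp add: w_def algebra_simps)
  qed
  then have "0 \<le> X" using X2 by simp
  then show ?thesis using diff by simp
qed

context gwp
begin

definition Fs :: "real \<Rightarrow> real" where "Fs t = Gs t - Ph t"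

lemma Ph_sums: "smP t \<Longrightarrow> (\<lambda>k. p k * t ^ k) sums Ph t"
  unfolding smP_def Ph_def by (rule summable_sums)

lemma Gs_sums: "smG t \<Longrightarrow> (\<lambda>k. real k * p k * t ^ k) sums Gs t"
  unfolding smG_def Gs_def by (rule summable_sums)

lemma Fs_sums: "smP t \<Longrightarrow> smG t \<Longrightarrow> (\<lambda>k. (real k - 1) * p k * t ^ k) sums Fs t"
  unfolding Fs_def using sums_diff[OF Gs_sums Ph_sums] by (simp add: algebra_simps)

lemma Ph0: "Ph 0 = p 0" unfolding Ph_def using powser_zero[of p] by simp
lemma Gs0: "Gs 0 = 0" unfolding Gs_def using powser_zero[of "\<lambda>k. real k * p k"] by simp
lemma Fs0: "Fs 0 = - p 0" by (simp add: Fs_def Ph0 Gs0)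

lemma smP0: "smP 0" unfolding smP_def by simp
lemma smG0: "smG 0" unfolding smG_def by simp

lemma pK: obtains K where "2 \<le> K" "0 < p K" using pbig by (metis Suc_1 Suc_leI)

lemma Fs_strict_mono:
  assumes s: "0 \<le> s" "s < t" and P: "smP t" and G: "smG t"
  shows "Fs s < Fs t"
proof -
  have Ps: "smP s" and Gs': "smG s" using smP_mono[OF P] smG_mono[OF G] s by auto
  obtain K where K: "2 \<le> K" "0 < p K" by (rule pK)
  have sm: "(\<lambda>k. (real k - 1) * p k * t ^ k - (real k - 1) * p k * s ^ k) sums (Fs t - Fs s)"
    by (intro sums_diff Fs_sums P G Ps Gs')
  have nn: "0 \<le> (real k - 1) * p k * t ^ k - (real k - 1) * p k * s ^ k" for k
  proof (cases k)
    case (Suc m)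
    have "s ^ k \<le> t ^ k" using s by (intro power_mono) auto
    then have "0 \<le> (real k - 1) * p k * (t ^ k - s ^ k)" using Suc by (simp add: pnn)
    then show ?thesis by (simp add: algebra_simps)
  qed simp
  have "s ^ K < t ^ K" using s K by (intro power_strict_mono) auto
  then have "0 < (real K - 1) * p K * (t ^ K - s ^ K)" using K by simp
  then have pos: "0 < (real K - 1) * p K * t ^ K - (real K - 1) * p K * s ^ K" by (simp add: algebra_simps)
  have "0 < Fs t - Fs s" using suminf_pos2[OF sums_summable[OF sm] nn pos] sums_unique[OF sm] by simp
  then show ?thesis by simp
qed

lemma Fs_mono: "0 \<le> s \<Longrightarrow> s \<le> t \<Longrightarrow> smP t \<Longrightarrow> smG t \<Longrightarrow> Fs s \<le> Fs t"
  using Fs_strict_mono[of s t] by (cases "s = t") auto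

lemma minimization:
  assumes tau: "0 < \<tau>" "smP \<tau>" "smG \<tau>" "Gs \<tau> \<le> Ph \<tau>"
    and t: "0 \<le> t" "smP t" and cond: "Gs \<tau> = Ph \<tau> \<or> t \<le> \<tau>"
  shows "t * Ph \<tau> \<le> \<tau> * Ph t \<and> (t \<noteq> \<tau> \<longrightarrow> t * Ph \<tau> < \<tau> * Ph t)"
proof -
  define d where "d k = \<tau> * (p k * t ^ k) + \<tau> * ((real k - 1) * p k * \<tau> ^ k) - t * (real k * p k * \<tau> ^ k)" for k
  have sm: "d sums (\<tau> * Ph t + \<tau> * Fs \<tau> - t * Gs \<tau>)"
    unfolding d_def by (intro sums_diff sums_add sums_mult Ph_sums Fs_sums Gs_sums tau t)
  have dk: "d k = p k * (\<tau> * t ^ k + (real k - 1) * \<tau> ^ (k + 1) - real k * \<tau> ^ k * t)" for k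
    by (simp add: d_def algebra_simps)
  have nn: "0 \<le> d k" for k
    unfolding dk using tangent_ineq[OF t(1) less_imp_le[OF tau(1)], of k] by (simp add: pnn)
  define D where "D = \<tau> * Ph t + \<tau> * Fs \<tau> - t * Gs \<tau>"
  have D0: "0 \<le> D" unfolding D_def using sums_unique[OF sm] suminf_nonneg[OF sums_summable[OF sm] nn] by simp
  have Dpos: "t \<noteq> \<tau> \<Longrightarrow> 0 < D"
  proof -
    assume ne: "t \<noteq> \<tau>"
    obtain K where K: "2 \<le> K" "0 < p K" by (rule pK)
    have "0 < d K" unfolding dk using tangent_strict[OF t(1) tau(1) K(1) ne] K(2) by simp
    then show "0 < D" unfolding D_def using sums_unique[OF sm] suminf_pos2[OF sums_summable[OF sm] nn] by simp
  qed
  have eq: "\<tau> * Ph t - t * Ph \<tau> = D + (\<tau> - t) * (Ph \<tau> - Gs \<tau>)"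
    unfolding D_def Fs_def by (simp add: algebra_simps)
  have "0 \<le> (\<tau> - t) * (Ph \<tau> - Gs \<tau>)" using cond tau(4) by auto
  then show ?thesis using eq D0 Dpos by auto
qed

lemma DS:
  assumes s: "0 \<le> s" "s \<le> t" and P: "smP t" and G: "smG t"
  shows "Gs s * Ph t \<le> Gs t * Ph s"
proof -
  have Ps: "smP s" and Gs': "smG s" using smP_mono[OF P] smG_mono[OF G] s by auto
  have l1: "(\<lambda>N. (\<Sum>k<N. real k * p k * s ^ k) * (\<Sum>j<N. p j * t ^ j)) \<longlonglongrightarrow> Gs s * Ph t"
    by (intro tendsto_mult sums_def[THEN iffD1] Gs_sums Ph_sums Gs' P)
  have l2: "(\<lambda>N. (\<Sum>k<N. real k * p k * t ^ k) * (\<Sum>j<N. p j * s ^ j)) \<longlonglongrightarrow> Gs t * Ph s"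
    by (intro tendsto_mult sums_def[THEN iffD1] Gs_sums Ph_sums G Ps)
  show ?thesis by (rule LIMSEQ_le[OF l1 l2]) (use DSfin[OF pnn s] in auto)
qed

end


lemma mono_tendsto_at_top:
  fixes f :: "real \<Rightarrow> ereal"
  assumes mono: "\<And>s t. a \<le> s \<Longrightarrow> s \<le> t \<Longrightarrow> f s \<le> f t"
  shows "(f \<longlongrightarrow> (SUP t\<in>{a..}. f t)) at_top"
proof (rule order_tendstoI)
  fix y assume "y < (SUP t\<in>{a..}. f t)"
  then obtain t where t: "a \<le> t" "y < f t" by (auto simp: less_SUP_iff)
  show "\<forall>\<^sub>F x in at_top. y < f x"
    by (rule eventually_at_top_linorderI[of t]) (use t mono in \<open>fastforce intro: less_le_trans\<close>)
next
  fix y assume y: "(SUP t\<in>{a..}. f t) < y"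
  show "\<forall>\<^sub>F x in at_top. f x < y"
  proof (rule eventually_at_top_linorderI[of a])
    fix x assume "a \<le> x"
    then have "f x \<le> (SUP t\<in>{a..}. f t)" by (intro SUP_upper) auto
    then show "f x < y" using y by simp
  qed
qed

lemma mono_tendsto_at_left:
  fixes f :: "real \<Rightarrow> ereal"
  assumes ab: "a < b" and mono: "\<And>s t. a \<le> s \<Longrightarrow> s \<le> t \<Longrightarrow> t < b \<Longrightarrow> f s \<le> f t"
  shows "(f \<longlongrightarrow> (SUP t\<in>{a..<b}. f t)) (at_left b)"
proof (rule order_tendstoI)
  fix y assume "y < (SUP t\<in>{a..<b}. f t)"
  then obtain t where t: "a \<le> t" "t < b" "y < f t" by (auto simp: less_SUP_iff)
  have ev: "\<forall>\<^sub>F x in at_left b. x \<in> {t<..<b}" by (rule eventually_at_left_real[OF t(2)])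
  show "\<forall>\<^sub>F x in at_left b. y < f x"
    by (rule eventually_mono[OF ev]) (use t mono in \<open>fastforce intro: less_le_trans\<close>)
next
  fix y assume y: "(SUP t\<in>{a..<b}. f t) < y"
  have ev: "\<forall>\<^sub>F x in at_left b. x \<in> {a<..<b}" by (rule eventually_at_left_real[OF ab])
  show "\<forall>\<^sub>F x in at_left b. f x < y"
  proof (rule eventually_mono[OF ev])
    fix x assume "x \<in> {a<..<b}"
    then have "f x \<le> (SUP t\<in>{a..<b}. f t)" by (intro SUP_upper) auto
    then show "f x < y" using y by simp
  qed
qed

context gwp
begin

definition fN :: "nat \<Rightarrow> real \<Rightarrow> real" where
  "fN N t = (\<Sum>k<N. (real k - 1) * p k * t ^ k)"

lemma fN_le_Fs:
  assumes "0 \<le> t" "smP t" "smG t" "1 \<le> N"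
  shows "fN N t \<le> Fs t"
  unfolding fN_def sums_unique[OF Fs_sums[OF assms(2,3)]]
  by (rule sum_le_suminf[OF sums_summable[OF Fs_sums[OF assms(2,3)]]]) (use assms in \<open>auto simp: pnn\<close>)

lemma fN0: "fN 0 t = 0" by (simp add: fN_def)

lemma H1':
  assumes r: "0 < r" "rho = ereal r" and N: "0 < fN N r"
  shows "\<exists>t1. 0 \<le> t1 \<and> ereal t1 < rho \<and> 0 < Fs t1"
proof -
  have N1: "1 \<le> N" using N fN0[of r] by (cases N) auto
  have "((\<lambda>x. fN N x) \<longlongrightarrow> fN N r) (at_left r)"
    unfolding fN_def by (intro tendsto_intros)
  then have ev1: "\<forall>\<^sub>F x in at_left r. 0 < fN N x" using N by (rule order_tendstoD)
  have ev2: "\<forall>\<^sub>F x in at_left r. x \<in> {0<..<r}" by (rule eventually_at_left_real[OF r(1)])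
  obtain x where x: "0 < fN N x" "x \<in> {0<..<r}"
    using eventually_happens'[OF trivial_limit_at_left_real eventually_conj[OF ev1 ev2]] by auto
  have xr: "ereal x < rho" using x r by simp
  have x0: "0 \<le> x" using x by simp
  have P: "smP x" using rho_smP[of x] xr x0 by simp
  have G: "smG x" using rho_smG[OF x0 xr] .
  have "fN N x \<le> Fs x" by (intro fN_le_Fs N1 P G x0)
  then show ?thesis using x xr by (intro exI[of _ x]) auto
qed

lemma exists_pos_F:
  defines "r \<equiv> real_of_ereal rho"
  assumes c: "rho = \<infinity> \<or> \<not> smP r \<or> \<not> smG r \<or> 0 < Fs r"
  shows "\<exists>t1. 0 \<le> t1 \<and> ereal t1 < rho \<and> 0 < Fs t1"
proof (cases "rho = \<infinity>")
  case True
  obtain K where K: "2 \<le> K" "0 < p K" by (rule pK)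
  define t1 where "t1 = 1 + p 0 / ((real K - 1) * p K)"
  have cK: "0 < (real K - 1) * p K" using K by simp
  have t1: "1 \<le> t1" unfolding t1_def using cK p0 by simp
  have lt: "ereal t1 < rho" using True by simp
  have P: "smP t1" using rho_smP[of t1] t1 lt by simp
  have G: "smG t1" using rho_smG[OF _ lt] t1 by simp
  have "(\<Sum>k\<in>{0, K}. (real k - 1) * p k * t1 ^ k) \<le> fN (K + 1) t1"
    unfolding fN_def by (rule sum_mono2) (use K t1 in \<open>auto simp: pnn\<close>)
  moreover have "(\<Sum>k\<in>{0, K}. (real k - 1) * p k * t1 ^ k) = - p 0 + (real K - 1) * p K * t1 ^ K"
    using K by simp
  moreover have "t1 \<le> t1 ^ K" using t1 K power_increasing[of 1 K t1] by simp
  then have "(real K - 1) * p K * t1 \<le> (real K - 1) * p K * t1 ^ K" using cK by (intro mult_left_mono) auto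
  moreover have "(real K - 1) * p K * t1 = (real K - 1) * p K + p 0"
  proof -
    have "(real K - 1) * p K * (p 0 / ((real K - 1) * p K)) = p 0" 
    proof -
      have gen: "\<And>c a::real. c \<noteq> 0 \<Longrightarrow> c * (a / c) = a" by simp
      show ?thesis by (rule gen) (use cK in linarith)
    qed
    then show ?thesis unfolding t1_def by (simp add: distrib_left)
  qed
  ultimately have "0 < fN (K + 1) t1" using cK by linarith
  moreover have "fN (K + 1) t1 \<le> Fs t1" using t1 by (intro fN_le_Fs P G) auto
  ultimately show ?thesis using t1 True by (intro exI[of _ t1]) auto
next
  case False
  have r1: "1 \<le> r" using rho_ge1 False unfolding r_def by (cases rho) auto
  have rr: "rho = ereal r" using rho_ge1 False unfolding r_def by (cases rho) auto
  define c where "c k = (real k - 1) * p k * r ^ k" for k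
  have cnn: "1 \<le> k \<Longrightarrow> 0 \<le> c k" for k using r1 by (simp add: c_def pnn)
  have "\<exists>N. 0 < fN N r"
  proof (cases "smP r \<and> smG r")
    case True
    then have pos: "0 < Fs r" using c False by auto
    have "(\<lambda>N. fN N r) \<longlonglongrightarrow> Fs r" unfolding fN_def using Fs_sums[of r] True by (simp add: sums_def)
    then have "\<forall>\<^sub>F N in sequentially. 0 < fN N r" using pos by (rule order_tendstoD)
    then show ?thesis using eventually_happens' by (metis eventually_sequentially order_refl)
  next
    case nsm: False
    have "\<not> summable c"
    proof
      assume sc: "summable c"
      show False
      proof (cases "smP r")
        case True
        then have "smG r" unfolding smG_def
          using summable_add[OF sc True[unfolded smP_def]] by (simp add: c_def algebra_simps)
        then show False using nsm True by simp
      next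
        case False
        have "smP r" unfolding smP_def
        proof (rule summable_comparison_test'[OF sc, of 2])
          fix n :: nat assume "2 \<le> n"
          then have "p n * r ^ n \<le> (real n - 1) * p n * r ^ n"
            using r1 mult_right_mono[of 1 "real n - 1" "p n * r ^ n"] by (simp add: pnn algebra_simps)
          then show "norm (p n * r ^ n) \<le> c n" using r1 by (simp add: c_def pnn abs_mult)
        qed
        then show False using False by simp
      qed
    qed
    then obtain N where "0 < (\<Sum>k<N. c k)" using nonsummable_unbounded[of c 0] cnn by auto
    then show ?thesis unfolding fN_def c_def by auto
  qed
  then obtain N where "0 < fN N r" by auto
  then show ?thesis using H1'[of r N] rr r1 by auto
qed

end


context gwp
begin

lemma isCont_Fs:
  assumes x: "0 \<le> x" "ereal x < rho"
  shows "isCont Fs x"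
proof -
  obtain K where K: "x < K" "ereal K < rho" using exists_between[OF x] by blast
  have K0: "0 \<le> K" using x K by simp
  have sP: "summable (\<lambda>n. p n * K ^ n)" using rho_smP[of K] K K0 unfolding smP_def by simp
  have sG: "summable (\<lambda>n. (real n * p n) * K ^ n)" using rho_smG[OF K0 K(2)] unfolding smG_def by simp
  have nx: "norm x < norm K" using x K by simp
  have c1: "isCont (\<lambda>x. \<Sum>n. p n * x ^ n) x" by (rule isCont_powser[OF sP nx])
  have c2: "isCont (\<lambda>x. \<Sum>n. (real n * p n) * x ^ n) x" by (rule isCont_powser[OF sG nx])
  have "Fs = (\<lambda>x. (\<Sum>n. (real n * p n) * x ^ n) - (\<Sum>n. p n * x ^ n))"
    by (simp add: fun_eq_iff Fs_def Gs_def Ph_def)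
  then show ?thesis using continuous_diff[OF c2 c1] by simp
qed

lemma IVT_Fs:
  assumes t1: "0 \<le> t1" "ereal t1 < rho" "0 < Fs t1"
  shows "\<exists>\<tau>. 0 < \<tau> \<and> \<tau> < t1 \<and> Fs \<tau> = 0"
proof -
  have "\<exists>x\<ge>0. x \<le> t1 \<and> Fs x = 0"
  proof (rule IVT)
    show "Fs 0 \<le> 0" using Fs0 p0 by simp
    show "0 \<le> Fs t1" using t1 by simp
    show "0 \<le> t1" by (rule t1)
    show "\<forall>x. 0 \<le> x \<and> x \<le> t1 \<longrightarrow> isCont Fs x"
    proof (intro allI impI)
      fix x assume "0 \<le> x \<and> x \<le> t1"
      moreover then have "ereal x < rho" using t1 by (meson ereal_less_eq(3) le_less_trans)
      ultimately show "isCont Fs x" using isCont_Fs by auto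
    qed
  qed
  then obtain x where x: "0 \<le> x" "x \<le> t1" "Fs x = 0" by auto
  have "x \<noteq> 0" using x Fs0 p0 by auto
  moreover have "x \<noteq> t1" using x t1 by auto
  ultimately show ?thesis using x by (intro exI[of _ x]) auto
qed

lemma psi_nn: "0 \<le> t \<Longrightarrow> smP t \<Longrightarrow> 0 \<le> psi p t"
proof -
  assume t: "0 \<le> t" "smP t"
  show ?thesis
  proof (cases "t = 0")
    case True then show ?thesis by (simp add: psi0)
  next
    case False
    then have "0 < t" using t by simp
    then show ?thesis using psi_eq[OF _ t(2)] Gs_nn[of t] Ph_pos[OF t(2)] t by auto
  qed
qed

lemma psi_mono:
  assumes s: "0 \<le> s" "s \<le> t" and t: "ereal t < rho"
  shows "psi p s \<le> psi p t"
proof -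
  have t0: "0 \<le> t" using s by simp
  have P: "smP t" using rho_smP[of t] t t0 by simp
  have G: "smG t" using rho_smG[OF t0 t] .
  have Ps: "smP s" and Gs': "smG s" using smP_mono[OF P] smG_mono[OF G] s by auto
  show ?thesis
  proof (cases "s = 0")
    case True then show ?thesis using psi_nn[OF t0 P] by (simp add: psi0)
  next
    case False
    then have s0: "0 < s" using s by simp
    then have t0': "0 < t" using s by simp
    have Pp: "0 < Ph s" "0 < Ph t" using Ph_pos Ps P s t0 by auto
    have "Gs s * Ph t \<le> Gs t * Ph s" by (rule DS[OF s P G])
    then have "Gs s / Ph s \<le> Gs t / Ph t" using Pp by (simp add: divide_simps mult.commute)
    then show ?thesis using psi_eq[OF s0 Ps] psi_eq[OF t0' P] Gs' G by simp
  qed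
qed

lemma psi_gt1:
  assumes "0 \<le> t1" "ereal t1 < rho" "0 < Fs t1"
  shows "1 < psi p t1"
proof -
  have P: "smP t1" using rho_smP[of t1] assms by simp
  have G: "smG t1" using rho_smG assms by simp
  have "t1 \<noteq> 0" using assms Fs0 p0 by auto
  then have t0: "0 < t1" using assms by simp
  have Pp: "0 < Ph t1" using Ph_pos P assms by simp
  have "1 < Gs t1 / Ph t1" using assms(3) Pp by (simp add: Fs_def)
  then show ?thesis using psi_eq[OF t0 P] G by simp
qed

lemma nu_gt:
  defines "r \<equiv> real_of_ereal rho"
  assumes c: "rho = \<infinity> \<or> \<not> smP r"
  shows "1 < gw_nu p"
proof -
  obtain t1 where t1: "0 \<le> t1" "ereal t1 < rho" "0 < Fs t1"
    using exists_pos_F c unfolding r_def by blast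
  have gt: "1 < psi p t1" by (rule psi_gt1[OF t1])
  show ?thesis
  proof (cases "rho = \<infinity>")
    case True
    have "(psi p \<longlongrightarrow> (SUP t\<in>{0..}. psi p t)) at_top"
      by (rule mono_tendsto_at_top) (use True in \<open>auto intro: psi_mono\<close>)
    then have "Lim at_top (psi p) = (SUP t\<in>{0..}. psi p t)" by (intro tendsto_Lim) auto
    moreover have "psi p t1 \<le> (SUP t\<in>{0..}. psi p t)" using t1 by (intro SUP_upper) auto
    ultimately show ?thesis using True gt unfolding gw_nu_def rho_def by (simp add: Let_def)
  next
    case False
    have r1: "1 \<le> r" using rho_ge1 False unfolding r_def by (cases rho) auto
    have rr: "rho = ereal r" using rho_ge1 False unfolding r_def by (cases rho) auto
    have nP: "\<not> smP r" using c False by simp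
    have PhiE: "PhiE p r = \<infinity>" using PhiE_eq[of r] nP r1 by simp
    have "(psi p \<longlongrightarrow> (SUP t\<in>{0..<r}. psi p t)) (at_left r)"
      by (rule mono_tendsto_at_left) (use r1 rr in \<open>auto intro: psi_mono\<close>)
    then have "Lim (at_left r) (psi p) = (SUP t\<in>{0..<r}. psi p t)"
      by (intro tendsto_Lim) (auto simp: trivial_limit_at_left_real)
    moreover have "psi p t1 \<le> (SUP t\<in>{0..<r}. psi p t)" using t1 rr by (intro SUP_upper) auto
    moreover have rr': "real_of_ereal rho = r" by (simp add: r_def)
    ultimately show ?thesis using False gt PhiE unfolding gw_nu_def rho_def[symmetric]
      by (simp add: Let_def rr' order_less_le_trans)
  qed
qed

lemma nu_fin:
  assumes "rho \<noteq> \<infinity>" "smP (real_of_ereal rho)"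
  shows "gw_nu p = psi p (real_of_ereal rho)"
proof -
  have r1: "1 \<le> real_of_ereal rho" using rho_ge1 assms(1) by (cases rho) auto
  have "PhiE p (real_of_ereal rho) \<noteq> \<infinity>" using PhiE_eq[of "real_of_ereal rho"] assms r1 by simp
  then show ?thesis using assms unfolding gw_nu_def rho_def[symmetric] by (simp add: Let_def)
qed

lemma psi_one_iff:
  assumes y: "0 \<le> y" "smP y"
  shows "psi p y = 1 \<longleftrightarrow> 0 < y \<and> smG y \<and> Fs y = 0"
proof (cases "y = 0")
  case True then show ?thesis by (simp add: psi0)
next
  case False
  then have y0: "0 < y" using y by simp
  have Pp: "0 < Ph y" using Ph_pos y by simp
  show ?thesis using psi_eq[OF y0 y(2)] Pp y0 by (auto simp: Fs_def field_simps)
qed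

lemma PsiX_one:
  assumes y: "0 \<le> y" "ereal y \<le> rho" and nu: "\<not> smP y \<Longrightarrow> gw_nu p \<noteq> 1"
  shows "PsiX p y = 1 \<longleftrightarrow> 0 < y \<and> smP y \<and> smG y \<and> Fs y = 0"
proof (cases "smP y")
  case True
  then have "PhiE p y \<noteq> \<infinity>" using PhiE_eq y by simp
  then show ?thesis unfolding PsiX_def using psi_one_iff[OF y(1) True] True by simp
next
  case False
  then have "PhiE p y = \<infinity>" using PhiE_eq y by simp
  then show ?thesis unfolding PsiX_def using nu False by simp
qed

lemma Fs_zero_unique:
  assumes "0 \<le> x" "smP x" "smG x" "Fs x = 0" "0 \<le> y" "smP y" "smG y" "Fs y = 0"
  shows "x = y"
proof (rule ccontr)
  assume "x \<noteq> y"
  then consider "x < y" | "y < x" by linarith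
  then show False
  proof cases
    case 1 then show False using Fs_strict_mono[of x y] assms by simp
  next
    case 2 then show False using Fs_strict_mono[of y x] assms by simp
  qed
qed

lemma tau_good:
  defines "\<tau> \<equiv> gw_tau p"
  shows "0 < \<tau> \<and> ereal \<tau> \<le> rho \<and> smP \<tau> \<and> smG \<tau> \<and> Gs \<tau> \<le> Ph \<tau>
    \<and> (Gs \<tau> = Ph \<tau> \<or> ereal \<tau> = rho)"
proof -
  define r where "r = real_of_ereal rho"
  have rho_fin: "rho \<noteq> \<infinity> \<Longrightarrow> rho = ereal r \<and> 1 \<le> r"
    using rho_ge1 unfolding r_def by (cases rho) auto
  show ?thesis
  proof (cases "rho \<noteq> \<infinity> \<and> smP r \<and> smG r \<and> Fs r < 0")
    case True
    then have rr: "rho = ereal r" "1 \<le> r" using rho_fin by auto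
    have Pp: "0 < Ph r" using Ph_pos True rr by simp
    have "gw_nu p = psi p r" using nu_fin True unfolding r_def by simp
    also have "\<dots> = ereal (Gs r / Ph r)" using psi_eq[of r] True rr by simp
    also have "\<dots> < 1" using True Pp by (simp add: Fs_def)
    finally have "\<not> 1 \<le> gw_nu p" by simp
    then have "\<tau> = r" unfolding \<tau>_def gw_tau_def r_def rho_def by simp
    then show ?thesis using True rr by (simp add: Fs_def)
  next
    case False
    have "\<exists>\<tau>0. 0 < \<tau>0 \<and> ereal \<tau>0 \<le> rho \<and> smP \<tau>0 \<and> smG \<tau>0 \<and> Fs \<tau>0 = 0 \<and> 1 \<le> gw_nu p"
    proof (cases "rho \<noteq> \<infinity> \<and> smP r \<and> smG r \<and> Fs r = 0")
      case True
      then have rr: "rho = ereal r" "1 \<le> r" using rho_fin by auto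
      have "gw_nu p = psi p r" using nu_fin True unfolding r_def by simp
      also have "\<dots> = 1" using psi_one_iff[of r] True rr by simp
      finally show ?thesis using True rr by (intro exI[of _ r]) auto
    next
      case False2: False
      have c: "rho = \<infinity> \<or> \<not> smP r \<or> \<not> smG r \<or> 0 < Fs r" using False False2 by auto
      obtain t1 where t1: "0 \<le> t1" "ereal t1 < rho" "0 < Fs t1" using exists_pos_F c unfolding r_def by blast
      obtain \<tau>0 where \<tau>0: "0 < \<tau>0" "\<tau>0 < t1" "Fs \<tau>0 = 0" using IVT_Fs[OF t1] by blast
      have "ereal \<tau>0 < ereal t1" using \<tau>0 by simp
      then have lt: "ereal \<tau>0 < rho" using t1(2) by (rule less_trans)
      have P: "smP \<tau>0" using rho_smP[of \<tau>0] lt \<tau>0 by simp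
      have G: "smG \<tau>0" using rho_smG[OF _ lt] \<tau>0 by simp
      have nu: "1 \<le> gw_nu p"
      proof (cases "rho = \<infinity> \<or> \<not> smP r")
        case True
        then show ?thesis using nu_gt unfolding r_def by (simp add: less_imp_le)
      next
        case False3: False
        then have rr: "rho = ereal r" "1 \<le> r" "smP r" using rho_fin by auto
        have r0: "0 < r" using rr by simp
        have "gw_nu p = psi p r" using nu_fin rr False3 unfolding r_def by simp
        moreover have "1 \<le> psi p r"
        proof (cases "smG r")
          case True
          then have "0 < Fs r" using c False3 by simp
          moreover have "0 < Ph r" using Ph_pos rr by simp
          ultimately have "1 \<le> Gs r / Ph r" by (simp add: Fs_def)
          then show ?thesis using psi_eq[OF r0 rr(3)] True by simp
        qed (use psi_eq[OF r0 rr(3)] in simp)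
        ultimately show ?thesis by simp
      qed
      show ?thesis using \<tau>0 lt P G nu by (intro exI[of _ \<tau>0]) auto
    qed
    then obtain \<tau>0 where \<tau>0: "0 < \<tau>0" "ereal \<tau>0 \<le> rho" "smP \<tau>0" "smG \<tau>0" "Fs \<tau>0 = 0" and nu: "1 \<le> gw_nu p"
      by blast
    have nu1: "\<not> smP y \<Longrightarrow> 0 \<le> y \<Longrightarrow> ereal y \<le> rho \<Longrightarrow> gw_nu p \<noteq> 1" for y
    proof -
      assume y: "\<not> smP y" "0 \<le> y" "ereal y \<le> rho"
      have "\<not> ereal y < rho"
      proof
        assume "ereal y < rho"
        then have "smP y" using rho_smP[of y] y(2) by simp
        then show False using y(1) by simp
      qed
      then have "ereal y = rho" using y(3) by (meson order_le_less)
      then have "rho \<noteq> \<infinity>" "y = r" unfolding r_def by (auto dest: sym)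
      then have "1 < gw_nu p" using nu_gt y unfolding r_def by simp
      then show ?thesis by simp
    qed
    have the: "(THE \<tau>. 0 \<le> \<tau> \<and> ereal \<tau> \<le> conv_radius p \<and> PsiX p \<tau> = 1) = \<tau>0"
    proof (rule the_equality)
      show "0 \<le> \<tau>0 \<and> ereal \<tau>0 \<le> conv_radius p \<and> PsiX p \<tau>0 = 1"
        using \<tau>0 PsiX_one[of \<tau>0] nu1[of \<tau>0] unfolding rho_def by simp
      fix y assume y: "0 \<le> y \<and> ereal y \<le> conv_radius p \<and> PsiX p y = 1"
      then have "0 < y \<and> smP y \<and> smG y \<and> Fs y = 0" using PsiX_one[of y] nu1[of y] unfolding rho_def by auto
      then show "y = \<tau>0" using Fs_zero_unique[of y \<tau>0] \<tau>0 by simp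
    qed
    have "\<tau> = \<tau>0" unfolding \<tau>_def gw_tau_def using nu the by simp
    then show ?thesis using \<tau>0 by (simp add: Fs_def)
  qed
qed

end


context gwp
begin

definition tau :: real where "tau = gw_tau p"
definition mm :: real where "mm = Ph tau / tau"

lemma tau_pos: "0 < tau" and tau_le: "ereal tau \<le> rho" and tau_P: "smP tau" and tau_G: "smG tau"
  and tau_GP: "Gs tau \<le> Ph tau" and tau_alt: "Gs tau = Ph tau \<or> ereal tau = rho"
  using tau_good unfolding tau_def by auto

lemma Ph_tau_pos: "0 < Ph tau" using Ph_pos tau_P tau_pos by simp
lemma mm_pos: "0 < mm" unfolding mm_def using Ph_tau_pos tau_pos by simp

lemma minim:
  assumes t: "0 < t" "smP t"
  shows "mm \<le> Ph t / t \<and> (t \<noteq> tau \<longrightarrow> mm < Ph t / t)"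
proof -
  have cond: "Gs tau = Ph tau \<or> t \<le> tau"
  proof (cases "Gs tau = Ph tau")
    case False
    then have er: "ereal tau = rho" using tau_alt by simp
    have "ereal t \<le> ereal tau" using smP_rho[OF t(2)] t er by simp
    then show ?thesis by simp
  qed simp
  have "t * Ph tau \<le> tau * Ph t \<and> (t \<noteq> tau \<longrightarrow> t * Ph tau < tau * Ph t)"
    by (rule minimization[OF tau_pos tau_P tau_G tau_GP _ t(2) cond]) (use t in simp)
  then show ?thesis unfolding mm_def using t tau_pos
    by (simp add: divide_simps mult.commute)
qed

lemma mm_le1: "mm \<le> 1" using minim[of 1] smP1 Ph1 by simp

lemma mm_eq1: "mm = 1 \<longleftrightarrow> tau = 1"
proof
  assume "mm = 1" then show "tau = 1" using minim[of 1] smP1 Ph1 by (cases "tau = 1") auto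
next
  assume "tau = 1" then show "mm = 1" unfolding mm_def using Ph1 by simp
qed

lemma PhiE_tau: "PhiE p tau = ereal (Ph tau)" using PhiE_eq[of tau] tau_pos tau_P by simp

lemma INF_claim: "(INF t\<in>{0<..}. PhiE p t / ereal t) = ereal mm"
proof (rule antisym)
  show "(INF t\<in>{0<..}. PhiE p t / ereal t) \<le> ereal mm"
  proof (rule INF_lower2[of tau])
    show "tau \<in> {0<..}" using tau_pos by simp
    show "PhiE p tau / ereal tau \<le> ereal mm" unfolding PhiE_tau mm_def using tau_pos by (simp add: ereal_divide)
  qed
next
  show "ereal mm \<le> (INF t\<in>{0<..}. PhiE p t / ereal t)"
  proof (rule INF_greatest)
    fix t :: real assume "t \<in> {0<..}"
    then have t: "0 < t" by simp
    show "ereal mm \<le> PhiE p t / ereal t"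
    proof (cases "smP t")
      case True
      then show ?thesis using minim[OF t True] PhiE_eq[of t] t by (simp add: ereal_divide)
    next
      case False
      then show ?thesis using PhiE_eq[of t] t by (simp add: ereal_divide_ereal)
    qed
  qed
qed

lemma gw_mean_eq: "gw_mean p = (if smG 1 then ereal (Gs 1) else \<infinity>)"
proof -
  have nn: "0 \<le> real k * p k" for k by (simp add: pnn)
  show ?thesis
  unfolding gw_mean_def smG_def Gs_def
  using summable_ereal[of "\<lambda>k. real k * p k", OF nn] suminf_ereal'[of "\<lambda>k. real k * p k"]
  by auto
qed

lemma Fs1: "smG 1 \<Longrightarrow> Fs 1 = Gs 1 - 1" by (simp add: Fs_def Ph1)

lemma mean_gt1:
  assumes "1 < gw_mean p"
  shows "tau < 1"
proof (rule ccontr)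
  assume "\<not> tau < 1"
  then have t1: "1 \<le> tau" by simp
  have G1: "smG 1" using smG_mono[OF tau_G] t1 by simp
  then have "1 < Gs 1" using assms gw_mean_eq by simp
  then have "0 < Fs 1" using Fs1 G1 by simp
  moreover have "Fs 1 \<le> Fs tau" using Fs_mono[OF _ t1 tau_P tau_G] by simp
  moreover have "Fs tau \<le> 0" using tau_GP by (simp add: Fs_def)
  ultimately show False by simp
qed

lemma mean_lt1:
  assumes "gw_mean p < 1"
  shows "smG 1 \<and> Fs 1 < 0"
proof -
  have G1: "smG 1" using assms gw_mean_eq by (cases "smG 1") auto
  then show ?thesis using assms gw_mean_eq Fs1 by simp
qed

lemma mean_lt1_rho:
  assumes "gw_mean p < 1" "1 < rho"
  shows "1 < tau"
proof (cases "Gs tau = Ph tau")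
  case True
  have m: "smG 1" "Fs 1 < 0" using mean_lt1[OF assms(1)] by auto
  show ?thesis
  proof (rule ccontr)
    assume "\<not> 1 < tau"
    then have "tau \<le> 1" by simp
    then have "Fs tau \<le> Fs 1" using Fs_mono[OF less_imp_le[OF tau_pos] _ smP1 m(1)] by simp
    then show False using True m by (simp add: Fs_def)
  qed
next
  case False
  then have "ereal tau = rho" using tau_alt by simp
  then have "1 < ereal tau" using assms(2) by simp
  then show ?thesis by (simp add: one_ereal_def)
qed

lemma crit_tau1:
  assumes "gw_mean p = 1 \<or> (gw_mean p < 1 \<and> rho = 1)"
  shows "tau = 1"
  using assms
proof
  assume m1: "gw_mean p = 1"
  then have G1: "smG 1" and F1: "Fs 1 = 0" using gw_mean_eq Fs1 by (cases "smG 1", auto)+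
  show "tau = 1"
  proof (cases "Gs tau = Ph tau")
    case True
    then show ?thesis using Fs_zero_unique[of tau 1] tau_pos tau_P tau_G smP1 G1 F1 by (simp add: Fs_def)
  next
    case False
    then have er: "ereal tau = rho" using tau_alt by simp
    then have "1 \<le> ereal tau" using rho_ge1 by simp
    then have t1: "1 \<le> tau" by (simp add: one_ereal_def)
    show ?thesis
    proof (rule ccontr)
      assume "tau \<noteq> 1"
      then have "Fs 1 < Fs tau" using Fs_strict_mono[of 1 tau] t1 tau_P tau_G by simp
      then show False using F1 tau_GP by (simp add: Fs_def)
    qed
  qed
next
  assume a: "gw_mean p < 1 \<and> rho = 1"
  have m: "smG 1" "Fs 1 < 0" using mean_lt1 a by auto
  show "tau = 1"
  proof (cases "ereal tau = rho")
    case True then show ?thesis using a by (simp add: one_ereal_def)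
  next
    case False
    then have eq: "Gs tau = Ph tau" using tau_alt by simp
    have "tau \<le> 1" using tau_le a by (simp add: one_ereal_def)
    then have "Fs tau \<le> Fs 1" using Fs_mono[OF less_imp_le[OF tau_pos] _ smP1 m(1)] by simp
    then show ?thesis using eq m by (simp add: Fs_def)
  qed
qed

lemma tau1_crit:
  assumes "tau = 1"
  shows "gw_mean p = 1 \<or> (gw_mean p < 1 \<and> rho = 1)"
proof (cases "Gs tau = Ph tau")
  case True
  then show ?thesis using assms tau_G gw_mean_eq Ph1 by (simp add: one_ereal_def)
next
  case False
  then have er: "ereal tau = rho" using tau_alt by simp
  have "Gs 1 < 1" using False tau_GP assms Ph1 by simp
  then have "gw_mean p < 1" using assms tau_G gw_mean_eq by (simp add: one_ereal_def)
  moreover have "rho = 1" using er assms by (simp add: one_ereal_def)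
  ultimately show ?thesis by simp
qed

end


context gwp
begin

abbreviation "a \<equiv> gw_size_prob p"

lemma a_nn: "0 \<le> a n" by (rule gsp_nn[where p=p, OF pnn])

lemma a_upper: "a n \<le> tau * mm ^ n"
proof -
  define x where "x = 1 / mm"
  have x: "0 < x" unfolding x_def using mm_pos by simp
  have xP: "x * (\<Sum>k. p k * tau ^ k) \<le> tau"
    unfolding x_def mm_def Ph_def[symmetric] using Ph_tau_pos tau_pos by simp
  have S: "St p n x \<le> tau"
    by (rule St_upper[where p=p, OF pnn less_imp_le[OF x] less_imp_le[OF tau_pos] tau_P[unfolded smP_def] xP])
  have "a n * x ^ n \<le> St p n x" unfolding St_eq
    by (rule member_le_sum[where f="\<lambda>n. a n * x ^ n"]) (use x a_nn in auto)
  then have "a n * x ^ n \<le> tau" using S by simp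
  then have "a n \<le> tau / x ^ n" using x by (simp add: field_simps)
  then show ?thesis unfolding x_def using mm_pos by (simp add: power_divide)
qed

lemma a0: "a 0 = 0"
proof -
  have "node_count t \<noteq> 0" for t using node_count_pos[of t] by linarith
  then have "{t. node_count t = 0} = {}" by blast
  then show ?thesis unfolding gw_size_prob_def by (simp only:) simp
qed

lemma a1: "a 1 = p 0"
proof -
  have "{t. node_count t = 1} = {Node []}"
  proof (intro set_eqI iffI)
    fix t assume "t \<in> {t. node_count t = 1}"
    then obtain ts where t: "t = Node ts" "sum_list (map node_count ts) = 0" by (cases t) auto
    then have "length ts = 0" using length_le_sum_nc[of ts] by linarith
    then have "ts = []" by simp
    then show "t \<in> {Node []}" using t by simp
  qed simp
  then show ?thesis by (simp add: gw_size_prob_def)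
qed

lemma no_geometric_bound:
  assumes r: "0 < r" and bound: "\<And>n. a n \<le> C * r ^ n"
  shows "mm \<le> r"
proof (rule ccontr)
  assume "\<not> mm \<le> r"
  then have rm: "r < mm" by simp
  define x where "x = 2 / (mm + r)"
  have x0: "0 < x" unfolding x_def using r mm_pos by simp
  have rx: "r * x < 1" unfolding x_def using r rm by (simp add: field_simps)
  have C0: "0 \<le> C" using bound[of 0] a0 r by simp
  have sg: "summable (\<lambda>n. C * (r * x) ^ n)"
    by (intro summable_mult summable_geometric) (use r x0 rx in simp)
  have sm: "summable (\<lambda>n. a n * x ^ n)"
  proof (rule summable_comparison_test'[OF sg, of 0])
    fix n
    have "a n * x ^ n \<le> C * r ^ n * x ^ n" using bound[of n] x0 by (simp add: mult_right_mono)
    then show "norm (a n * x ^ n) \<le> C * (r * x) ^ n" using x0 a_nn[of n] by (simp add: power_mult_distrib mult.assoc)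
  qed
  define z where "z = (\<Sum>n. a n * x ^ n)"
  have L: "summable (\<lambda>k. p k * z ^ k) \<and> x * (\<Sum>k. p k * z ^ k) \<le> z"
    unfolding z_def by (rule St_lower[where p=p, OF pnn x0 sm])
  have "a 1 * x ^ 1 \<le> z" unfolding z_def by (rule term_le_suminf[OF sm]) (use a_nn x0 in simp)
  moreover have "0 < p 0 * x" using p0 x0 by simp
  ultimately have z0: "0 < z" using a1 by simp
  have Pz: "smP z" using L by (simp add: smP_def)
  have "x * Ph z \<le> z" using L by (simp add: Ph_def)
  then have "Ph z / z \<le> 1 / x" using x0 z0 by (simp add: field_simps)
  moreover have "mm \<le> Ph z / z" using minim[OF z0 Pz] by simp
  ultimately have "mm \<le> 1 / x" by simp
  also have "1 / x = (mm + r) / 2" unfolding x_def by simp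
  finally show False using rm by simp
qed

lemma exists_good_q:
  assumes mu: "mu < ln mm"
  shows "\<exists>q\<ge>2. 0 < a q \<and> mu * (real q - 1) < ln (a q / p 0)"
proof (rule ccontr)
  assume "\<not> ?thesis"
  then have h: "2 \<le> q \<Longrightarrow> 0 < a q \<Longrightarrow> ln (a q / p 0) \<le> mu * (real q - 1)" for q by (auto simp: not_less)
  define r where "r = exp mu"
  have r0: "0 < r" unfolding r_def by simp
  have b: "a n \<le> (p 0 / r) * r ^ n" for n
  proof -
    consider "n = 0" | "n = 1" | "2 \<le> n" by linarith
    then show ?thesis
    proof cases
      case 1 then show ?thesis using a0 p0 r0 by simp
    next
      case 2 then show ?thesis using a1 r0 by simp
    next
      case 3
      show ?thesis
      proof (cases "0 < a n")
        case True
        have "ln (a n / p 0) \<le> mu * (real n - 1)" by (rule h[OF 3 True])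
        then have "a n / p 0 \<le> exp (mu * (real n - 1))"
          using True p0 by (metis divide_pos_pos exp_ln exp_le_cancel_iff)
        also have "exp (mu * (real n - 1)) = r ^ (n - 1)"
          unfolding r_def using 3 by (simp add: exp_of_nat_mult[symmetric] of_nat_diff mult.commute)
        also have "\<dots> = r ^ n / r" using 3 r0 by (simp add: power_diff)
        finally show ?thesis using p0 r0 by (simp add: field_simps)
      next
        case False
        then show ?thesis using a_nn[of n] p0 r0 by (simp add: not_less)
      qed
    qed
  qed
  have "mm \<le> r" by (rule no_geometric_bound[OF r0 b])
  then have "ln mm \<le> mu" unfolding r_def using mm_pos by (simp add: ln_le_cancel_iff[symmetric])
  then show False using mu by simp
qed

lemma b_supermult: "1 \<le> n \<Longrightarrow> 1 \<le> m \<Longrightarrow> (a n / p 0) * (a m / p 0) \<le> a (n + m - 1) / p 0"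
  using gsp_supermult[where p=p, OF pnn, of n m] p0 by (simp add: field_simps)

lemma b_iter:
  assumes x: "1 \<le> x" and q: "1 \<le> q"
  shows "(a x / p 0) * (a q / p 0) ^ i \<le> a (x + i * (q - 1)) / p 0"
proof (induction i)
  case 0 then show ?case by simp
next
  case (Suc i)
  have nn: "0 \<le> a q / p 0" using a_nn p0 by simp
  have "(a x / p 0) * (a q / p 0) ^ Suc i = ((a x / p 0) * (a q / p 0) ^ i) * (a q / p 0)" by simp
  also have "\<dots> \<le> (a (x + i * (q - 1)) / p 0) * (a q / p 0)" by (rule mult_right_mono[OF Suc nn])
  also have "\<dots> \<le> a (x + i * (q - 1) + q - 1) / p 0" by (rule b_supermult) (use x q in auto)
  also have "x + i * (q - 1) + q - 1 = x + Suc i * (q - 1)" using q by simp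
  finally show ?case .
qed

lemma eventually_pos:
  "\<exists>N. \<forall>s\<ge>N. gw_span p dvd s \<longrightarrow> s \<noteq> 0 \<longrightarrow> 0 < a (s + 1)"
proof -
  have "\<exists>N. \<forall>s\<ge>N. Gcd {k. 0 < p k} dvd s \<longrightarrow> s \<noteq> 0 \<longrightarrow> s \<in> {k. 0 < a (k + 1)}"
  proof (rule semigroup_large)
    fix u v assume "u \<in> {k. 0 < a (k + 1)}" "v \<in> {k. 0 < a (k + 1)}"
    then have "0 < (a (u+1) / p 0) * (a (v+1) / p 0)" using p0 by simp
    also have "\<dots> \<le> a ((u+1) + (v+1) - 1) / p 0" by (rule b_supermult) auto
    finally have "0 < a ((u+1) + (v+1) - 1)" using p0 by (simp add: zero_less_divide_iff)
    then show "u + v \<in> {k. 0 < a (k + 1)}" by simp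
  next
    fix k assume "k \<in> {k. 0 < p k}" "k \<noteq> 0"
    then have "0 < p k * p 0 ^ k" using p0 by simp
    also have "\<dots> \<le> a (k + 1)" by (rule gsp_star[where p=p, OF pnn])
    finally show "k \<in> {k. 0 < a (k + 1)}" by simp
  next
    show "\<exists>k\<in>{k. 0 < p k}. k \<noteq> 0" using pbig by auto
  next
    fix s assume "s \<in> {k. 0 < a (k + 1)}"
    then have "gw_span p dvd (s + 1 - 1)" using gsp_pos_dvd[where p=p, OF pnn] by blast
    then show "Gcd {k. 0 < p k} dvd s" by (simp add: gw_span_def)
  qed
  then show ?thesis by (simp add: gw_span_def)
qed

lemma span_pos: "0 < gw_span p"
proof -
  have "gw_span p \<noteq> 0" unfolding gw_span_def using pbig Gcd_0_iff[of "{k. 0 < p k}"] by auto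
  then show ?thesis by simp
qed

lemma lower_bound:
  assumes eps: "0 < e"
  shows "\<exists>n0. \<forall>n\<ge>n0. n mod gw_span p = 1 mod gw_span p \<longrightarrow> 0 < a n \<and> ln mm - e < ln (a n) / real n"
proof -
  define d where "d = gw_span p"
  have d0: "0 < d" unfolding d_def by (rule span_pos)
  define mu where "mu = ln mm - e / 2"
  have "mu < ln mm" using eps by (simp add: mu_def)
  then obtain q where q: "2 \<le> q" "0 < a q" "mu * (real q - 1) < ln (a q / p 0)"
    using exists_good_q by blast
  define Q where "Q = q - 1"
  have Q1: "1 \<le> Q" and rQ: "real Q = real q - 1" using q by (auto simp: Q_def)
  define c where "c = ln (a q / p 0) / real Q"
  have lnq: "ln (a q / p 0) = c * real Q" unfolding c_def using Q1 by simp
  have cmu: "mu < c" using q(3) Q1 unfolding c_def rQ[symmetric] by (simp add: field_simps)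
  have dQ: "d dvd Q" unfolding Q_def d_def using gsp_pos_dvd[where p=p, OF pnn q(2)] by simp
  obtain N where N: "\<forall>s\<ge>N. d dvd s \<longrightarrow> s \<noteq> 0 \<longrightarrow> 0 < a (s + 1)"
    using eventually_pos unfolding d_def by blast
  define N1 where "N1 = d * (N + 1)"
  have "1 * (N + 1) \<le> d * (N + 1)" using d0 by (intro mult_le_mono1) simp
  then have N1: "N \<le> N1" "1 \<le> N1" "d dvd N1" unfolding N1_def by auto
  define W where "W = {s. N1 \<le> s \<and> s < N1 + Q \<and> d dvd s}"
  have finW: "finite W" unfolding W_def by (rule finite_subset[of _ "{..<N1 + Q}"]) auto
  have N1W: "N1 \<in> W" unfolding W_def using N1 Q1 by simp
  have posW: "s \<in> W \<Longrightarrow> 0 < a (s + 1)" for s using N N1 unfolding W_def by auto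
  define beta where "beta = Min ((\<lambda>s. a (s + 1) / p 0) ` W)"
  have beta0: "0 < beta" unfolding beta_def using finW N1W posW p0 by (subst Min_gr_iff) auto
  have betale: "s \<in> W \<Longrightarrow> beta \<le> a (s + 1) / p 0" for s unfolding beta_def using finW
    by (intro Min_le) auto
  define B where "B = ln (p 0) + ln beta - (real N1 + real Q) * \<bar>c\<bar>"
  have key: "0 < a n \<and> real n * c + B \<le> ln (a n)" if n: "n mod d = 1 mod d" "N1 + 1 \<le> n" for n
  proof -
    have "d dvd n - 1" using n mod_eq_dvd_iff_nat[of 1 n d] by simp
    define j where "j = n - 1 - N1"
    have dj: "d dvd j" unfolding j_def by (rule dvd_diff_nat[OF \<open>d dvd n - 1\<close> N1(3)])
    define i where "i = j div Q"
    define s where "s = N1 + j mod Q"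
    have jdec: "j = i * Q + j mod Q" unfolding i_def by simp
    have jm: "j mod Q < Q" using Q1 by simp
    have sW: "s \<in> W" unfolding W_def s_def using jm N1(3) dj dQ by (auto simp: dvd_mod)
    have ns: "n = (s + 1) + i * (q - 1)" using n jdec unfolding s_def j_def Q_def by simp
    have "(a (s + 1) / p 0) * (a q / p 0) ^ i \<le> a n / p 0"
      using b_iter[of "s + 1" q i] q ns by simp
    moreover have "beta * (a q / p 0) ^ i \<le> (a (s + 1) / p 0) * (a q / p 0) ^ i"
      by (rule mult_right_mono[OF betale[OF sW]]) (use a_nn p0 in simp)
    ultimately have le: "beta * (a q / p 0) ^ i \<le> a n / p 0" by linarith
    have qp: "0 < a q / p 0" using q p0 by simp
    have lpos: "0 < beta * (a q / p 0) ^ i" using beta0 qp by simp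
    then have "0 < a n / p 0" using le by linarith
    then have an: "0 < a n" using p0 by (simp add: zero_less_divide_iff)
    have "ln (beta * (a q / p 0) ^ i) \<le> ln (a n / p 0)" using le lpos by simp
    moreover have "ln (beta * (a q / p 0) ^ i) = ln beta + real i * (c * real Q)"
    proof -
      have "ln (beta * (a q / p 0) ^ i) = ln beta + ln ((a q / p 0) ^ i)"
        using beta0 qp by (intro ln_mult_pos) auto
      also have "ln ((a q / p 0) ^ i) = real i * ln (a q / p 0)" by (rule ln_realpow)
      finally show ?thesis by (simp add: lnq)
    qed
    moreover have "ln (a n / p 0) = ln (a n) - ln (p 0)" using an p0 by (simp add: ln_div)
    ultimately have l1: "ln beta + real i * (c * real Q) + ln (p 0) \<le> ln (a n)" by simp
    have iQ1: "real (i * Q) \<le> real n" using jdec unfolding j_def by linarith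
    have iQ2: "real n - real N1 - real Q \<le> real (i * Q)" using jdec jm n unfolding j_def by linarith
    have "real n * c - (real N1 + real Q) * \<bar>c\<bar> \<le> c * real (i * Q)"
    proof (cases "0 \<le> c")
      case True
      have "c * (real n - real N1 - real Q) \<le> c * real (i * Q)" by (rule mult_left_mono[OF iQ2 True])
      then show ?thesis using True by (simp add: algebra_simps)
    next
      case False
      have "c * real n \<le> c * real (i * Q)" using iQ1 False by (simp add: mult_left_mono_neg)
      then have h1: "real n * c \<le> c * real (i * Q)" by (simp add: mult.commute)
      have h2: "0 \<le> (real N1 + real Q) * \<bar>c\<bar>" by simp
      show ?thesis using h1 h2 by linarith
    qed
    then have "real n * c + B \<le> ln beta + real i * (c * real Q) + ln (p 0)"
      unfolding B_def by (simp add: algebra_simps)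
    then show ?thesis using l1 an by simp
  qed
  obtain n1 :: nat where n1: "2 * \<bar>B\<bar> / e < real n1" using reals_Archimedean2 by blast
  show ?thesis
  proof (intro exI[of _ "max n1 (N1 + 1)"] allI impI conjI)
    fix n assume nn: "max n1 (N1 + 1) \<le> n" and nc: "n mod gw_span p = 1 mod gw_span p"
    have k: "0 < a n" "real n * c + B \<le> ln (a n)" using key[of n] nn nc unfolding d_def by auto
    then show "0 < a n" by simp
    have npos: "0 < real n" using nn N1 by simp
    have "2 * \<bar>B\<bar> / e < real n" using n1 nn by simp
    then have "\<bar>B\<bar> < e / 2 * real n" using eps by (simp add: field_simps)
    then have "- (e / 2) * real n < B" by linarith
    moreover have "mu * real n < c * real n" using cmu npos by (rule mult_strict_right_mono)
    moreover have "(mu - e / 2) * real n = mu * real n - e / 2 * real n" by (simp add: left_diff_distrib)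
    moreover have "real n * c = c * real n" by simp
    ultimately have "(mu - e / 2) * real n < real n * c + B" by linarith
    then have "(ln mm - e) * real n < ln (a n)" using k unfolding mu_def by simp
    then show "ln mm - e < ln (a n) / real n" using npos by (simp add: field_simps)
  qed
qed

lemma upper_bound:
  assumes eps: "0 < e"
  shows "\<exists>n0. \<forall>n\<ge>n0. 0 < a n \<longrightarrow> ln (a n) / real n < ln mm + e"
proof -
  obtain n1 :: nat where n1: "\<bar>ln tau\<bar> / e < real n1" using reals_Archimedean2 by blast
  show ?thesis
  proof (intro exI[of _ "max n1 1"] allI impI)
    fix n assume nn: "max n1 1 \<le> n" and an: "0 < a n"
    have npos: "0 < real n" using nn by simp
    have "ln (a n) \<le> ln (tau * mm ^ n)" using a_upper[of n] an by simp
    also have "\<dots> = ln tau + real n * ln mm" using tau_pos mm_pos by (simp add: ln_mult_pos ln_realpow)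
    finally have l: "ln (a n) \<le> ln tau + real n * ln mm" .
    have "\<bar>ln tau\<bar> / e < real n" using n1 nn by simp
    then have "ln tau < e * real n" using eps by (simp add: field_simps)
    then have "ln (a n) < (ln mm + e) * real n" using l by (simp add: algebra_simps)
    then show "ln (a n) / real n < ln mm + e" using npos by (simp add: field_simps)
  qed
qed

lemma the_limit:
  "((\<lambda>n. ln (a n) / real n) \<longlongrightarrow> ln mm) (inf sequentially (principal {n. n mod gw_span p = 1 mod gw_span p}))"
proof (rule tendstoI)
  fix e :: real assume e: "0 < e"
  obtain n0 where n0: "\<forall>n\<ge>n0. n mod gw_span p = 1 mod gw_span p \<longrightarrow> 0 < a n \<and> ln mm - e < ln (a n) / real n"
    using lower_bound[OF e] by blast
  obtain n1 where n1: "\<forall>n\<ge>n1. 0 < a n \<longrightarrow> ln (a n) / real n < ln mm + e"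
    using upper_bound[OF e] by blast
  show "\<forall>\<^sub>F n in inf sequentially (principal {n. n mod gw_span p = 1 mod gw_span p}).
          dist (ln (a n) / real n) (ln mm) < e"
    unfolding eventually_inf_principal
  proof (rule eventually_sequentiallyI[of "max n0 n1"])
    fix n assume nn: "max n0 n1 \<le> n"
    show "n \<in> {n. n mod gw_span p = 1 mod gw_span p} \<longrightarrow> dist (ln (a n) / real n) (ln mm) < e"
    proof
      assume "n \<in> {n. n mod gw_span p = 1 mod gw_span p}"
      then have c: "n mod gw_span p = 1 mod gw_span p" by simp
      have l: "0 < a n" "ln mm - e < ln (a n) / real n" using n0 nn c by auto
      have u: "ln (a n) / real n < ln mm + e" using n1 nn l(1) by auto
      show "dist (ln (a n) / real n) (ln mm) < e" unfolding dist_real_def using l u by linarith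
    qed
  qed
qed

end


theorem theorem17p7:
  fixes p :: "nat \<Rightarrow> real"
  assumes dist: "offspring_dist p"
    and p0: "p 0 > 0"
    and pbig: "\<exists>k>1. p k > 0"
  defines "\<tau> \<equiv> gw_tau p"
    and "L \<equiv> ln (real_of_ereal (PhiE p (gw_tau p))) - ln (gw_tau p)"
  shows "0 < \<tau> \<and> ereal \<tau> \<le> conv_radius p \<and> PhiE p \<tau> \<noteq> \<infinity>
    \<and> ((\<lambda>n. ln (gw_size_prob p n) / real n) \<longlongrightarrow> L)
           (inf sequentially (principal {n. n mod gw_span p = 1 mod gw_span p}))
    \<and> (INF t\<in>{0<..}. PhiE p t / ereal t) = ereal (exp L)
    \<and> L \<le> 0
    \<and> (L = 0 \<longleftrightarrow> (gw_mean p = 1 \<or> (gw_mean p < 1 \<and> conv_radius p = 1)))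
    \<and> (gw_mean p > 1 \<longrightarrow> \<tau> < 1)
    \<and> (gw_mean p < 1 \<and> conv_radius p > 1 \<longrightarrow> \<tau> > 1)
    \<and> (gw_mean p = 1 \<or> (gw_mean p < 1 \<and> conv_radius p = 1) \<longrightarrow> \<tau> = 1)"
proof -
  interpret G: gwp p using dist p0 pbig by unfold_locales
  have te: "\<tau> = G.tau" unfolding \<tau>_def G.tau_def by simp
  have cr: "conv_radius p = G.rho" by (simp add: G.rho_def)
  have "L = ln (G.Ph G.tau) - ln G.tau" unfolding L_def G.tau_def[symmetric] G.PhiE_tau by simp
  also have "\<dots> = ln G.mm" unfolding G.mm_def using G.Ph_tau_pos G.tau_pos by (simp add: ln_div)
  finally have L: "L = ln G.mm" .
  have expL: "exp L = G.mm" using L G.mm_pos by simp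
  have L0: "L \<le> 0" using L G.mm_le1 G.mm_pos by simp
  have Leq: "L = 0 \<longleftrightarrow> G.tau = 1" using L G.mm_pos G.mm_eq1 by (metis exp_ln exp_zero ln_one)
  show ?thesis
    unfolding te cr
    using G.tau_pos G.tau_le G.PhiE_tau G.the_limit G.INF_claim expL L0 Leq L
      G.mean_gt1 G.mean_lt1_rho G.crit_tau1 G.tau1_crit
    by auto
qed

end
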